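(* Under the standing assumptions and assumption (A), there exists $C>0$ such that for all $\rho\in(0,\overline R)$ and $u\in L^2(D)\cap\mathcal{F}$, $$\mathcal{E}(u,u)\le C\big(\mathcal{E}^{(\rho)}(u,u)+(\rho\wedge R_0)^{-\alpha}\|u\|^2_{L^2(D)}\big).$$
   Context: Let $d\ge1$, $\alpha\in(0,2)$. $D\subset\mathbb{R}^d$ is a $\kappa$-fat open set (some $\kappa\in(0,1)$, localization constant $R_0\in(0,\mathrm{diam}(D)]$: for all $x\in\overline D$, $r\in(0,R_0)$ there is $z\in D$ with $B(z,\kappa r)\subset D\cap B(x,r)$) with Assouad dimension $\dim_{\rm A}(\partial D)<d$; $\gamma:=d-\dim_{\rm A}(\partial D)$; $\overline R:=\mathrm{diam}(D)\in(0,\infty]$; $\delta_D(x)=\mathrm{dist}(x,\partial D)$; $r\wedge\infty=r$. Assumption (A): $J$ symmetric Borel on $D\times D$, and there exist a continuous increasing $\Phi:[0,\infty)\to[1,\infty)$, $\Phi(0)=1$, with upper Matuszewska index $\overline\beta<\gamma\wedge\alpha$ ($\overline\beta$ = infimum of $\beta\ge0$ with $\Phi(r)/\Phi(s)\le C(r/s)^\beta$ for $0<s\le r$), $A_0\in(0,\infty]$, $C_1>1$ with $C_1^{-1}\le J(x,y)|x-y|^{d+\alpha}/\Phi\big(\frac{(|x-y|\wedge A_0)^2}{(\delta_D(x)\wedge A_0)(\delta_D(y)\wedge A_0)}\big)\le C_1$ for $x,y\in D$. $\mathcal{E}(u,v)=\frac12\int_{D\times D}(u(x)-u(y))(v(x)-v(y))J(x,y)dxdy$;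 $\mathcal{F}$ is the closure of $\mathrm{Lip}_c(\overline D)$ in $L^2(D)$ under $\mathcal{E}(u,u)+\|u\|^2_{L^2(D)}$. For $\rho\in(0,\overline R]$, $J^{(\rho)}(x,y)=\mathbf 1_{\{|x-y|<\rho\}}J(x,y)$ and $\mathcal{E}^{(\rho)}(u,v)=\frac12\int_{D\times D}(u(x)-u(y))(v(x)-v(y))J^{(\rho)}(x,y)dxdy$. *)

theory Defs
  imports "HOL-Analysis.Analysis"
begin

definition covering_number :: "'a::euclidean_space set \<Rightarrow> real \<Rightarrow> nat" where
  "covering_number A r = Inf {card F | F. finite F \<and> A \<subseteq> (\<Union>z\<in>F. ball z r)}"

(* Assouad dimension (ereal; Inf of empty set = \<infinity>) *)
definition assouad_dim :: "'a::euclidean_space set \<Rightarrow> ereal" where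
  "assouad_dim E = Inf {ereal s | s. s \<ge> 0 \<and> (\<exists>C>0. \<forall>x\<in>E. \<forall>r R. 0 < r \<and> r < R \<longrightarrow>
       real (covering_number (E \<inter> ball x R) r) \<le> C * (R / r) powr s)}"

definition upper_matuszewska :: "(real \<Rightarrow> real) \<Rightarrow> ereal" where
  "upper_matuszewska \<Phi> = Inf {ereal \<beta> | \<beta>. \<beta> \<ge> 0 \<and> (\<exists>C. \<forall>s r. 0 < s \<and> s \<le> r \<longrightarrow>
       \<Phi> r / \<Phi> s \<le> C * (r / s) powr \<beta>)}"

definition diam_e :: "'a::euclidean_space set \<Rightarrow> ereal" where
  "diam_e D = (if bounded D then ereal (diameter D) else \<infinity>)"

definition delta_e :: "'a::euclidean_space set \<Rightarrow> 'a \<Rightarrow> ereal" where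
  "delta_e D x = (if frontier D = {} then \<infinity> else ereal (infdist x (frontier D)))"

definition kappa_fat :: "'a::euclidean_space set \<Rightarrow> real \<Rightarrow> real \<Rightarrow> bool" where
  "kappa_fat D \<kappa> R0 \<longleftrightarrow> open D \<and> 0 < \<kappa> \<and> \<kappa> < 1 \<and> 0 < R0 \<and> ereal R0 \<le> diam_e D \<and>
     (\<forall>x\<in>closure D. \<forall>r. 0 < r \<and> r < R0 \<longrightarrow> (\<exists>z\<in>D. ball z (\<kappa> * r) \<subseteq> D \<inter> ball x r))"

definition kernel_arg :: "'a::euclidean_space set \<Rightarrow> ereal \<Rightarrow> 'a \<Rightarrow> 'a \<Rightarrow> real" where
  "kernel_arg D A0 x y = real_of_ereal ((min (ereal (dist x y)) A0) ^ 2 /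
      (min (delta_e D x) A0 * min (delta_e D y) A0))"

definition assumption_A :: "'a::euclidean_space set \<Rightarrow> real \<Rightarrow> ('a \<Rightarrow> 'a \<Rightarrow> real) \<Rightarrow> bool" where
  "assumption_A D \<alpha> J \<longleftrightarrow>
     (\<forall>x\<in>D. \<forall>y\<in>D. J x y = J y x) \<and>
     (\<lambda>p. if p \<in> D \<times> D then J (fst p) (snd p) else 0) \<in> borel_measurable borel \<and>
     (\<exists>\<Phi> A0 C1. continuous_on {0..} \<Phi> \<and> mono_on {0..} \<Phi> \<and> (\<forall>t\<ge>0. 1 \<le> \<Phi> t) \<and> \<Phi> 0 = 1 \<and>
        upper_matuszewska \<Phi> < min (ereal (real DIM('a)) - assouad_dim (frontier D)) (ereal \<alpha>) \<and>
        0 < A0 \<and> 1 < C1 \<and>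
        (\<forall>x\<in>D. \<forall>y\<in>D. x \<noteq> y \<longrightarrow>
           1 / C1 \<le> J x y * dist x y powr (real DIM('a) + \<alpha>) / \<Phi> (kernel_arg D A0 x y) \<and>
           J x y * dist x y powr (real DIM('a) + \<alpha>) / \<Phi> (kernel_arg D A0 x y) \<le> C1))"

definition jump_energy :: "('a::euclidean_space \<Rightarrow> 'a \<Rightarrow> real) \<Rightarrow> 'a set \<Rightarrow> ('a \<Rightarrow> real) \<Rightarrow> ennreal" where
  "jump_energy K D u = ennreal (1/2) *
     (\<integral>\<^sup>+ p. indicator (D \<times> D) p * ennreal ((u (fst p) - u (snd p))\<^sup>2 * K (fst p) (snd p)) \<partial>(lborel \<Otimes>\<^sub>M lborel))"

definition trunc_kernel :: "real \<Rightarrow> ('a::euclidean_space \<Rightarrow> 'a \<Rightarrow> real) \<Rightarrow> 'a \<Rightarrow> 'a \<Rightarrow> real" where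
  "trunc_kernel \<rho> J x y = (if dist x y < \<rho> then J x y else 0)"

definition l2sq :: "'a::euclidean_space set \<Rightarrow> ('a \<Rightarrow> real) \<Rightarrow> ennreal" where
  "l2sq D u = (\<integral>\<^sup>+ x. indicator D x * ennreal ((u x)\<^sup>2) \<partial>lborel)"

definition lip_c :: "'a::euclidean_space set \<Rightarrow> ('a \<Rightarrow> real) \<Rightarrow> bool" where
  "lip_c D \<phi> \<longleftrightarrow> (\<exists>L. L-lipschitz_on (closure D) \<phi>) \<and> compact (closure {x \<in> closure D. \<phi> x \<noteq> 0})"

(* u in L^2(D) \<inter> F: closure of Lip_c(closure D) w.r.t. E_1 = E + ||.||^2 *)
definition in_F :: "('a::euclidean_space \<Rightarrow> 'a \<Rightarrow> real) \<Rightarrow> 'a set \<Rightarrow> ('a \<Rightarrow> real) \<Rightarrow> bool" where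
  "in_F J D u \<longleftrightarrow> (\<lambda>x. indicator D x * u x) \<in> borel_measurable lborel \<and> l2sq D u < \<infinity> \<and>
     (\<exists>\<phi>::nat \<Rightarrow> 'a \<Rightarrow> real. (\<forall>n. lip_c D (\<phi> n)) \<and>
        (\<lambda>n. jump_energy J D (\<lambda>x. \<phi> n x - u x) + l2sq D (\<lambda>x. \<phi> n x - u x)) \<longlonglongrightarrow> 0)"

end

theory Submission
  imports Defs
begin

lemma ennreal_le_suminf: "(f::nat \<Rightarrow> ennreal) k \<le> suminf f"
  using sum_le_suminf[of f "{k}"] by (simp add: summableI)

lemma dyadic_ex:
  fixes a b :: real assumes "0 < b" "b \<le> a"
  shows "\<exists>k::nat. b * 2^k \<le> a \<and> a < b * 2^Suc k"
proof -
  obtain n::nat where n: "a/b < 2^n" using real_arch_pow[of 2 "a/b"] by auto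
  hence n': "a < b*2^n" using assms by (simp add: field_simps)
  define m where "m = (LEAST n. a < b*2^n)"
  have m: "a < b*2^m" unfolding m_def by (rule LeastI[of _ n]) (rule n')
  have "m \<noteq> 0"
  proof
    assume "m = 0" with m assms show False by simp
  qed
  then obtain k where mk: "m = Suc k" by (cases m) auto
  have "\<not> a < b*2^k" using not_less_Least[of k "\<lambda>n. a < b*2^n"] m_def mk by auto
  thus ?thesis using m mk by (intro exI[of _ k]) (auto simp: not_less)
qed

lemma geom_ennreal:
  fixes c q :: real assumes "0 \<le> c" "0 \<le> q" "q < 1"
  shows "(\<Sum>k. ennreal (c * q^k)) = ennreal (c / (1 - q))"
proof (rule suminf_ennreal_eq)
  show "0 \<le> c * q^k" for k using assms by simp
  have "(\<lambda>n. q^n) sums (1/(1-q))" using geometric_sums[of q] assms by simp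
  from sums_mult[OF this, of c] show "(\<lambda>k. c * q^k) sums (c / (1 - q))" by simp
qed

lemma dyadic_tail:
  fixes g :: "'a::euclidean_space \<Rightarrow> ennreal" and x :: 'a
  assumes g[measurable]: "g \<in> borel_measurable borel"
    and K: "\<And>R. R>0 \<Longrightarrow> (\<integral>\<^sup>+y. indicator (ball x R) y * g y \<partial>lborel) \<le> ennreal (K * R powr \<theta>)"
    and p\<theta>: "p + \<theta> < 0" and p: "p \<le> 0" and \<rho>: "\<rho> > 0" and K0: "K \<ge> 0"
  shows "(\<integral>\<^sup>+y. indicator {y. \<rho> \<le> dist x y} y * ennreal (dist x y powr p) * g y \<partial>lborel)
          \<le> ennreal (K * 2 powr \<theta> * \<rho> powr (p+\<theta>) / (1 - 2 powr (p+\<theta>)))"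
proof -
  define A where "A k = {y. \<rho>*2^k \<le> dist x y \<and> dist x y < \<rho>*2^Suc k}" for k::nat
  define c where "c k = (\<rho>*2^k) powr p" for k::nat
  have Am[measurable]: "A k \<in> sets borel" for k unfolding A_def by measurable
  have pw: "indicator {y. \<rho> \<le> dist x y} y * ennreal (dist x y powr p) * g y
        \<le> (\<Sum>k. ennreal (c k) * indicator (A k) y * g y)" for y
  proof cases
    assume "\<rho> \<le> dist x y"
    then obtain k where k: "\<rho>*2^k \<le> dist x y" "dist x y < \<rho>*2^Suc k" using dyadic_ex \<rho> by blast
    have "dist x y powr p \<le> c k" unfolding c_def using k \<rho> p by (intro powr_mono2') auto
    then have "indicator {y. \<rho> \<le> dist x y} y * ennreal (dist x y powr p) * g y
        \<le> ennreal (c k) * indicator (A k) y * g y"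
      using k \<open>\<rho> \<le> dist x y\<close> by (auto simp: A_def intro!: mult_right_mono ennreal_leI)
    also have "\<dots> \<le> (\<Sum>k. ennreal (c k) * indicator (A k) y * g y)"
      by (rule ennreal_le_suminf)
    finally show ?thesis .
  qed simp
  have "(\<integral>\<^sup>+y. indicator {y. \<rho> \<le> dist x y} y * ennreal (dist x y powr p) * g y \<partial>lborel)
      \<le> (\<integral>\<^sup>+y. (\<Sum>k. ennreal (c k) * indicator (A k) y * g y) \<partial>lborel)"
    by (rule nn_integral_mono) (rule pw)
  also have "\<dots> = (\<Sum>k. \<integral>\<^sup>+y. ennreal (c k) * indicator (A k) y * g y \<partial>lborel)"
    by (rule nn_integral_suminf) measurable
  also have "\<dots> \<le> (\<Sum>k. ennreal (K * 2 powr \<theta> * \<rho> powr (p+\<theta>) * (2 powr (p+\<theta>))^k))"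
  proof (rule suminf_le)
    fix k
    have "(\<integral>\<^sup>+y. ennreal (c k) * indicator (A k) y * g y \<partial>lborel)
        = ennreal (c k) * (\<integral>\<^sup>+y. indicator (A k) y * g y \<partial>lborel)"
      by (subst nn_integral_cmult[symmetric]) (auto simp: mult.assoc)
    also have "\<dots> \<le> ennreal (c k) * (\<integral>\<^sup>+y. indicator (ball x (\<rho>*2^Suc k)) y * g y \<partial>lborel)"
      by (intro mult_left_mono nn_integral_mono mult_right_mono)
         (auto simp: A_def indicator_def dist_commute)
    also have "\<dots> \<le> ennreal (c k) * ennreal (K * (\<rho>*2^Suc k) powr \<theta>)"
      using K[of "\<rho>*2^Suc k"] \<rho> by (intro mult_left_mono) auto
    also have "\<dots> = ennreal (c k * (K * (\<rho>*2^Suc k) powr \<theta>))"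
      using \<rho> K0 by (simp add: c_def ennreal_mult)
    also have "c k * (K * (\<rho>*2^Suc k) powr \<theta>) = K * 2 powr \<theta> * \<rho> powr (p+\<theta>) * (2 powr (p+\<theta>))^k"
    proof -
      have "c k = \<rho> powr p * 2 powr (k*p)" unfolding c_def using \<rho>
        by (simp add: powr_mult powr_realpow[symmetric] powr_powr)
      moreover have "(\<rho>*2^Suc k) powr \<theta> = \<rho> powr \<theta> * 2 powr \<theta> * 2 powr (k*\<theta>)" using \<rho>
        by (simp add: powr_mult powr_realpow[symmetric] powr_powr powr_add[symmetric] algebra_simps)
      moreover have "(2 powr (p+\<theta>))^k = 2 powr (k*p) * 2 powr (k*\<theta>)"
        by (simp add: powr_power powr_add[symmetric] algebra_simps)
      ultimately show ?thesis using \<rho> by (simp add: powr_add algebra_simps)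
    qed
    finally show "(\<integral>\<^sup>+y. ennreal (c k) * indicator (A k) y * g y \<partial>lborel)
        \<le> ennreal (K * 2 powr \<theta> * \<rho> powr (p+\<theta>) * (2 powr (p+\<theta>))^k)" .
  qed (auto simp: summableI)
  also have "\<dots> = ennreal (K * 2 powr \<theta> * \<rho> powr (p+\<theta>) / (1 - 2 powr (p+\<theta>)))"
    using p\<theta> K0 by (intro geom_ennreal) (auto simp: powr_less_one)
  finally show ?thesis .
qed

lemma infdist_lessE:
  assumes "A \<noteq> {}" "infdist x A < e"
  obtains a where "a \<in> A" "dist x a < e"
proof -
  have "(INF a\<in>A. dist x a) < e" using assms by (simp add: infdist_notempty)
  moreover have "bdd_below (dist x ` A)" by (rule bdd_belowI[of _ 0]) auto
  ultimately have "\<exists>a\<in>A. dist x a < e" using cINF_less_iff[OF assms(1)] by blast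
  then obtain a where "a \<in> A" "dist x a < e" by blast
  then show ?thesis using that by blast
qed
lemma cover_exists:
  fixes A :: "'a::euclidean_space set"
  assumes "bounded A" "r > 0"
  shows "\<exists>Z. finite Z \<and> card Z = covering_number A r \<and> A \<subseteq> (\<Union>z\<in>Z. ball z r)"
proof -
  obtain M c where M: "A \<subseteq> cball c M" using assms(1) unfolding bounded_subset_cball by blast
  have "seq_compact (cball (c::'a) M)" by (simp add: compact_imp_seq_compact)
  from seq_compact_imp_totally_bounded[OF this] assms(2) obtain k where
    k: "finite k" "cball c M \<subseteq> (\<Union>x\<in>k. ball x r)" by blast
  let ?S = "{card F | F. finite F \<and> A \<subseteq> (\<Union>z\<in>F. ball z r)}"
  have "A \<subseteq> (\<Union>x\<in>k. ball x r)" using k M by blast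
  hence "card k \<in> ?S" using k by blast
  hence "?S \<noteq> {}" by blast
  from Inf_nat_def1[OF this] have "Inf ?S \<in> ?S" .
  then obtain Z where "finite Z" "A \<subseteq> (\<Union>z\<in>Z. ball z r)" "card Z = Inf ?S" by auto
  thus ?thesis unfolding covering_number_def by blast
qed
lemma vol_nbhd:
  fixes F :: "'a::euclidean_space set" and s Cs :: real
  assumes Fne: "F \<noteq> {}"
    and cov: "\<forall>x\<in>F. \<forall>r R. 0 < r \<and> r < R \<longrightarrow> real (covering_number (F \<inter> ball x R) r) \<le> Cs * (R / r) powr s"
    and s: "s \<ge> 0" and t: "0 < t" "t \<le> R"
  shows "emeasure lborel {y\<in>ball y0 R. infdist y F \<le> t}
     \<le> ennreal (Cs * 6 powr s * unit_ball_vol (DIM('a)) * 3 ^ DIM('a) * R powr s * t powr (real DIM('a) - s))"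
proof (cases "{y\<in>ball y0 R. infdist y F \<le> t} = {}")
  case True thus ?thesis by (simp only: True emeasure_empty) simp
next
  case False
  then obtain y1 where y1: "y1 \<in> ball y0 R" "infdist y1 F \<le> t" by auto
  then obtain p where p: "p \<in> F" "dist y1 p < 2*t" using infdist_lessE[OF Fne, of y1 "2*t"] t by auto
  have "bounded (F \<inter> ball p (6*R))" by (meson bounded_Int bounded_ball)
  from cover_exists[OF this t(1)] obtain Z where Z: "finite Z" "card Z = covering_number (F \<inter> ball p (6*R)) t"
    "F \<inter> ball p (6*R) \<subseteq> (\<Union>z\<in>Z. ball z t)" by blast
  have cardZ: "real (card Z) \<le> Cs * (6*R / t) powr s" using cov p(1) t Z(2) by auto
  have sub: "{y\<in>ball y0 R. infdist y F \<le> t} \<subseteq> (\<Union>z\<in>Z. ball z (3*t))"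
  proof
    fix y assume y: "y \<in> {y\<in>ball y0 R. infdist y F \<le> t}"
    then obtain f where f: "f \<in> F" "dist y f < 2*t" using infdist_lessE[OF Fne, of y "2*t"] t by auto
    have "dist p f \<le> dist p y1 + dist y1 y0 + dist y0 y + dist y f"
      using dist_triangle[of p f y1] dist_triangle[of y1 f y0] dist_triangle[of y0 f y] by linarith
    also have "\<dots> < 6*R" using p f y y1 t by (auto simp: dist_commute)
    finally have "f \<in> F \<inter> ball p (6*R)" using f by auto
    with Z(3) obtain z where z: "z \<in> Z" "dist z f < t" by auto
    have "dist z y \<le> dist z f + dist f y" by (rule dist_triangle)
    also have "\<dots> < 3*t" using z f by (auto simp: dist_commute)
    finally show "y \<in> (\<Union>z\<in>Z. ball z (3*t))" using z by auto
  qed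
  have "emeasure lborel {y\<in>ball y0 R. infdist y F \<le> t} \<le> emeasure lborel (\<Union>z\<in>Z. ball z (3*t))"
    by (rule emeasure_mono[OF sub]) (auto intro!: borel_open)
  also have "\<dots> \<le> (\<Sum>z\<in>Z. emeasure lborel (ball z (3*t)))"
    by (rule emeasure_subadditive_finite) (auto simp: Z(1))
  also have "\<dots> = (\<Sum>z\<in>Z. ennreal (unit_ball_vol (DIM('a)) * (3*t) ^ DIM('a)))"
    using t by (simp add: emeasure_ball)
  also have "\<dots> = ennreal (real (card Z) * (unit_ball_vol (DIM('a)) * (3*t) ^ DIM('a)))"
    using t by (simp add: ennreal_of_nat_eq_real_of_nat ennreal_mult')
  also have "\<dots> \<le> ennreal (Cs * (6*R / t) powr s * (unit_ball_vol (DIM('a)) * (3*t) ^ DIM('a)))"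
    using cardZ t by (intro ennreal_leI mult_right_mono) auto
  also have "Cs * (6*R / t) powr s * (unit_ball_vol (DIM('a)) * (3*t) ^ DIM('a))
     = Cs * 6 powr s * unit_ball_vol (DIM('a)) * 3 ^ DIM('a) * R powr s * t powr (real DIM('a) - s)"
  proof -
    have e1: "(6*R / t) powr s = 6 powr s * R powr s / t powr s" using t by (simp add: powr_mult powr_divide)
    have e2: "(3*t) ^ DIM('a) = 3 ^ DIM('a) * t powr DIM('a)" using t by (simp add: power_mult_distrib powr_realpow)
    have e3: "t powr (real DIM('a) - s) = t powr DIM('a) / t powr s" using t by (simp add: powr_diff)
    show ?thesis unfolding e1 e2 e3 by (simp add: field_simps)
  qed
  finally show ?thesis .
qed

lemma infdist_meas[measurable]: "(\<lambda>x. infdist x F) \<in> borel_measurable borel"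
  by (intro borel_measurable_continuous_onI continuous_intros)

lemma pred_ball[measurable]: "Measurable.pred borel (\<lambda>x. x \<in> ball (y0::'a::euclidean_space) R)"
  unfolding mem_ball by measurable

lemma assouad_int:
  fixes F :: "'a::euclidean_space set" and s Cs :: real
  assumes Fne: "F \<noteq> {}"
    and cov: "\<forall>x\<in>F. \<forall>r R. 0 < r \<and> r < R \<longrightarrow> real (covering_number (F \<inter> ball x R) r) \<le> Cs * (R / r) powr s"
    and s: "s \<ge> 0" and Cs: "Cs \<ge> 0" and \<beta>: "0 \<le> \<beta>" "\<beta> < real DIM('a) - s" and R: "R > 0"
  shows "(\<integral>\<^sup>+y. indicator (ball y0 R) y * ennreal (infdist y F powr (-\<beta>)) \<partial>lborel)
    \<le> ennreal ((unit_ball_vol (DIM('a)) + (Cs * 6 powr s * unit_ball_vol (DIM('a)) * 3 ^ DIM('a)) * 2 powr \<beta>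
           / (1 - 2 powr (\<beta> - (real DIM('a) - s)))) * R powr (real DIM('a) - \<beta>))"
proof -
  let ?d = "real DIM('a)"
  let ?w = "unit_ball_vol ?d"
  define CV where "CV = Cs * 6 powr s * ?w * 3 ^ DIM('a)"
  define q where "q = 2 powr (\<beta> - (?d - s))"
  define c where "c k = (R/2^Suc k) powr (-\<beta>)" for k::nat
  define B where "B k = {y\<in>ball y0 R. infdist y F \<le> R/2^k}" for k::nat
  have CV0: "CV \<ge> 0" unfolding CV_def using Cs by simp
  have q: "0 \<le> q" "q < 1" unfolding q_def using \<beta> by (auto simp: powr_less_one)
  have Bm[measurable]: "B k \<in> sets borel" for k unfolding B_def by measurable
  have pw: "indicator (ball y0 R) y * ennreal (infdist y F powr (-\<beta>))
     \<le> ennreal (R powr (-\<beta>)) * indicator (ball y0 R) y + (\<Sum>k. ennreal (c k) * indicator (B k) y)" for y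
  proof (cases "y \<in> ball y0 R")
    case False thus ?thesis by simp
  next
    case yb: True
    consider "infdist y F = 0" | "infdist y F \<ge> R" | "0 < infdist y F" "infdist y F < R"
      using infdist_nonneg[of y F] by linarith
    thus ?thesis
    proof cases
      case 1 thus ?thesis by simp
    next
      case 2
      have "infdist y F powr (-\<beta>) \<le> R powr (-\<beta>)" using 2 R \<beta> by (intro powr_mono2') auto
      hence "indicator (ball y0 R) y * ennreal (infdist y F powr (-\<beta>)) \<le> ennreal (R powr (-\<beta>)) * indicator (ball y0 R) y"
        using yb by (simp add: ennreal_leI)
      thus ?thesis by (rule add_increasing2[rotated]) simp
    next
      case 3
      obtain k where k: "infdist y F * 2^k \<le> R" "R < infdist y F * 2^Suc k"
        using dyadic_ex[of "infdist y F" R] 3 by auto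
      have k1: "infdist y F \<le> R/2^k" using k by (simp add: field_simps)
      have k2: "R/2^Suc k \<le> infdist y F" using k by (simp add: field_simps del: power_Suc)
      have "infdist y F powr (-\<beta>) \<le> c k" unfolding c_def using k2 R \<beta> by (intro powr_mono2') auto
      hence "indicator (ball y0 R) y * ennreal (infdist y F powr (-\<beta>)) \<le> ennreal (c k) * indicator (B k) y"
        using yb k1 by (simp add: ennreal_leI B_def)
      also have "\<dots> \<le> (\<Sum>k. ennreal (c k) * indicator (B k) y)" by (rule ennreal_le_suminf)
      finally show ?thesis by (rule add_increasing[rotated]) simp
    qed
  qed
  have "(\<integral>\<^sup>+y. indicator (ball y0 R) y * ennreal (infdist y F powr (-\<beta>)) \<partial>lborel)
     \<le> (\<integral>\<^sup>+y. ennreal (R powr (-\<beta>)) * indicator (ball y0 R) y + (\<Sum>k. ennreal (c k) * indicator (B k) y) \<partial>lborel)"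
    by (rule nn_integral_mono) (rule pw)
  also have "\<dots> = (\<integral>\<^sup>+y. ennreal (R powr (-\<beta>)) * indicator (ball y0 R) y \<partial>lborel)
        + (\<integral>\<^sup>+y. (\<Sum>k. ennreal (c k) * indicator (B k) y) \<partial>lborel)"
    by (rule nn_integral_add) measurable
  also have "(\<integral>\<^sup>+y. (\<Sum>k. ennreal (c k) * indicator (B k) y) \<partial>lborel)
      = (\<Sum>k. \<integral>\<^sup>+y. ennreal (c k) * indicator (B k) y \<partial>lborel)"
    by (rule nn_integral_suminf) measurable
  also have "(\<integral>\<^sup>+y. ennreal (R powr (-\<beta>)) * indicator (ball y0 R) y \<partial>lborel)
       = ennreal (R powr (-\<beta>) * (?w * R powr ?d))"
    using R by (simp add: nn_integral_cmult_indicator emeasure_ball ennreal_mult powr_realpow)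
  also have "(\<Sum>k. \<integral>\<^sup>+y. ennreal (c k) * indicator (B k) y \<partial>lborel)
      \<le> (\<Sum>k. ennreal (CV * 2 powr \<beta> * R powr (?d - \<beta>) * q^k))"
  proof (rule suminf_le)
    fix k
    have t: "0 < R/2^k" "R/2^k \<le> R" using R by (auto simp: field_simps)
    have "(\<integral>\<^sup>+y. ennreal (c k) * indicator (B k) y \<partial>lborel) = ennreal (c k) * emeasure lborel (B k)"
      by (simp add: nn_integral_cmult_indicator)
    also have "\<dots> \<le> ennreal (c k) * ennreal (CV * R powr s * (R/2^k) powr (?d - s))"
      unfolding B_def CV_def using vol_nbhd[OF Fne cov s t, of y0] by (intro mult_left_mono) auto
    also have "\<dots> = ennreal (c k * (CV * R powr s * (R/2^k) powr (?d - s)))"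
      unfolding c_def by (rule ennreal_mult'[symmetric]) simp
    also have "c k * (CV * R powr s * (R/2^k) powr (?d - s)) = CV * 2 powr \<beta> * R powr (?d - \<beta>) * q^k"
    proof -
      have e1: "c k = R powr (-\<beta>) * 2 powr \<beta> * 2 powr (k*\<beta>)" unfolding c_def using R
        by (simp add: powr_divide powr_realpow[symmetric] powr_powr powr_minus powr_add powr_mult field_simps del: power_Suc)
      have e2: "(R/2^k) powr (?d - s) = R powr (?d - s) / 2 powr (k*(?d - s))" using R
        by (simp add: powr_divide powr_realpow[symmetric] powr_powr)
      have e3: "q^k = 2 powr (k*\<beta>) / 2 powr (k*(?d - s))"
      proof -
        have "q^k = 2 powr (real k * (\<beta> - (?d - s)))" unfolding q_def by (rule powr_power) simp
        also have "\<dots> = 2 powr (k*\<beta>) / 2 powr (k*(?d - s))" by (simp only: right_diff_distrib powr_diff)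
        finally show ?thesis .
      qed
      have e4: "R powr (?d - \<beta>) = R powr (-\<beta>) * R powr s * R powr (?d - s)" using R
        by (simp add: powr_add[symmetric])
      have gen: "\<And>a b c e f X::real. a*b*c*(CV*e*(f/X)) = CV*b*(a*e*f)*(c/X)" by (simp add: field_simps)
      show ?thesis unfolding e1 e2 e3 e4 by (rule gen)
    qed
    finally show "(\<integral>\<^sup>+y. ennreal (c k) * indicator (B k) y \<partial>lborel) \<le> ennreal (CV * 2 powr \<beta> * R powr (?d - \<beta>) * q^k)" .
  qed (auto simp: summableI)
  also have "(\<Sum>k. ennreal (CV * 2 powr \<beta> * R powr (?d - \<beta>) * q^k)) = ennreal (CV * 2 powr \<beta> * R powr (?d - \<beta>) / (1 - q))"
    using q CV0 by (intro geom_ennreal) auto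
  finally have "(\<integral>\<^sup>+y. indicator (ball y0 R) y * ennreal (infdist y F powr (-\<beta>)) \<partial>lborel)
    \<le> ennreal (R powr (-\<beta>) * (?w * R powr ?d)) + ennreal (CV * 2 powr \<beta> * R powr (?d - \<beta>) / (1 - q))"
    by (simp add: add_left_mono)
  also have "\<dots> = ennreal (R powr (-\<beta>) * (?w * R powr ?d) + CV * 2 powr \<beta> * R powr (?d - \<beta>) / (1 - q))"
    using q CV0 by (intro ennreal_plus[symmetric]) auto
  also have "R powr (-\<beta>) * (?w * R powr ?d) + CV * 2 powr \<beta> * R powr (?d - \<beta>) / (1 - q)
      = (?w + CV * 2 powr \<beta> / (1 - q)) * R powr (?d - \<beta>)"
  proof -
    have e5: "R powr (?d - \<beta>) = R powr (-\<beta>) * R powr ?d" using R by (simp add: powr_add[symmetric])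
    have gen: "\<And>a b w C Q::real. Q \<noteq> 0 \<Longrightarrow> a*(w*b) + C*(a*b)/Q = (w + C/Q)*(a*b)"
      by (simp add: field_simps)
    show ?thesis unfolding e5 by (rule gen) (use q in simp)
  qed
  finally show ?thesis unfolding CV_def q_def .
qed

lemma M2_meas: "f \<in> borel_measurable (lborel \<Otimes>\<^sub>M lborel) \<longleftrightarrow> f \<in> borel_measurable (borel :: ('a::euclidean_space \<times> 'a) measure)"
proof -
  have "sets (lborel \<Otimes>\<^sub>M lborel) = sets (borel \<Otimes>\<^sub>M borel :: ('a \<times> 'a) measure)"
    by (rule sets_pair_measure_cong) simp_all
  also have "\<dots> = sets (borel :: ('a \<times> 'a) measure)" by (metis borel_prod)
  finally show ?thesis using measurable_cong_sets[OF _ refl] by metis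
qed

lemma nn_swap:
  fixes f :: "'a::euclidean_space \<times> 'a \<Rightarrow> ennreal"
  assumes f[measurable]: "f \<in> borel_measurable (lborel \<Otimes>\<^sub>M lborel)"
  shows "(\<integral>\<^sup>+p. f (snd p, fst p) \<partial>(lborel \<Otimes>\<^sub>M lborel)) = (\<integral>\<^sup>+p. f p \<partial>(lborel \<Otimes>\<^sub>M lborel))"
proof -
  have "(\<integral>\<^sup>+p. f (snd p, fst p) \<partial>(lborel \<Otimes>\<^sub>M lborel)) = (\<integral>\<^sup>+x. \<integral>\<^sup>+y. f (y, x) \<partial>lborel \<partial>lborel)"
    using lborel.nn_integral_fst[of "\<lambda>p. f (snd p, fst p)" lborel] by simp
  also have "\<dots> = (\<integral>\<^sup>+p. f p \<partial>(lborel \<Otimes>\<^sub>M lborel))"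
    by (rule lborel_pair.nn_integral_snd) (rule f)
  finally show ?thesis .
qed

lemma energy_split:
  fixes D :: "'a::euclidean_space set" and J :: "'a \<Rightarrow> 'a \<Rightarrow> real" and u :: "'a \<Rightarrow> real"
  assumes Do: "open D"
    and Jm: "(\<lambda>p. if p \<in> D \<times> D then J (fst p) (snd p) else 0) \<in> borel_measurable borel"
    and Jsym: "\<forall>x\<in>D. \<forall>y\<in>D. J x y = J y x"
    and Jpos: "\<And>x y. x \<in> D \<Longrightarrow> y \<in> D \<Longrightarrow> x \<noteq> y \<Longrightarrow> 0 \<le> J x y"
    and um[measurable]: "u \<in> borel_measurable borel" and \<rho>: "\<rho> > 0"
  shows "jump_energy J D u \<le> jump_energy (trunc_kernel \<rho> J) D u
     + (\<integral>\<^sup>+x. indicator D x * ennreal (2 * (u x)\<^sup>2) *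
          (\<integral>\<^sup>+y. indicator D y * indicator {y. \<rho> \<le> dist x y} y * ennreal (J x y) \<partial>lborel) \<partial>lborel)"
proof -
  let ?M = "lborel \<Otimes>\<^sub>M lborel :: ('a \<times> 'a) measure"
  define Jp where "Jp p = (if p \<in> D \<times> D then J (fst p) (snd p) else 0)" for p
  have Jpm[measurable]: "Jp \<in> borel_measurable ?M" using Jm M2_meas unfolding Jp_def by blast
  have Dm[measurable]: "D \<in> sets borel" using Do by (rule borel_open)
  define f where "f p = indicator (D\<times>D) p * ennreal ((u (fst p) - u (snd p))\<^sup>2 * J (fst p) (snd p))" for p
  define ft where "ft p = indicator (D\<times>D) p * ennreal ((u (fst p) - u (snd p))\<^sup>2 * trunc_kernel \<rho> J (fst p) (snd p))" for p
  define fl where "fl p = indicator (D\<times>D) p * indicator {p. \<rho> \<le> dist (fst p) (snd p)} p * ennreal ((u (fst p) - u (snd p))\<^sup>2 * Jp p)" for p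
  define g where "g p = indicator (D\<times>D) p * indicator {p. \<rho> \<le> dist (fst p) (snd p)} p * ennreal (2 * (u (fst p))\<^sup>2 * Jp p)" for p
  have ft_alt: "ft p = indicator (D\<times>D) p * indicator {p. dist (fst p) (snd p) < \<rho>} p * ennreal ((u (fst p) - u (snd p))\<^sup>2 * Jp p)" for p
    by (cases "p \<in> D\<times>D") (auto simp: ft_def Jp_def trunc_kernel_def indicator_def)
  have ftm[measurable]: "ft \<in> borel_measurable ?M" unfolding ft_alt[abs_def] by measurable
  have flm[measurable]: "fl \<in> borel_measurable ?M" unfolding fl_def by measurable
  have gm[measurable]: "g \<in> borel_measurable ?M" unfolding g_def by measurable
  have split: "f p = ft p + fl p" for p
  proof (cases "p \<in> D\<times>D")
    case True
    then show ?thesis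
      by (cases "dist (fst p) (snd p) < \<rho>") (auto simp: f_def ft_def fl_def Jp_def trunc_kernel_def)
  qed (simp add: f_def ft_def fl_def)
  have fl_le: "fl p \<le> g p + g (snd p, fst p)" for p
  proof (cases "p \<in> D\<times>D \<and> \<rho> \<le> dist (fst p) (snd p)")
    case True
    obtain x y where p: "p = (x, y)" by (cases p)
    with True have xy: "x \<in> D" "y \<in> D" "\<rho> \<le> dist x y" by auto
    hence "x \<noteq> y" using \<rho> by auto
    hence J0: "0 \<le> J x y" using Jpos xy by auto
    have Jyx: "J y x = J x y" using Jsym xy by auto
    have "(u x - u y)\<^sup>2 = 2 * (u x)\<^sup>2 + 2 * (u y)\<^sup>2 - (u x + u y)\<^sup>2"
      by (simp add: power2_eq_square algebra_simps)
    moreover have "0 \<le> (u x + u y)\<^sup>2" by simp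
    ultimately have "(u x - u y)\<^sup>2 \<le> 2 * (u x)\<^sup>2 + 2 * (u y)\<^sup>2" by linarith
    note le1 = this
    have "(u x - u y)\<^sup>2 * J x y \<le> 2 * (u x)\<^sup>2 * J x y + 2 * (u y)\<^sup>2 * J y x"
      using Jyx mult_right_mono[OF le1 J0] by (simp add: algebra_simps)
    hence "ennreal ((u x - u y)\<^sup>2 * J x y) \<le> ennreal (2 * (u x)\<^sup>2 * J x y) + ennreal (2 * (u y)\<^sup>2 * J y x)"
      using J0 Jyx by (simp add: ennreal_plus[symmetric] del: ennreal_plus)
    thus ?thesis using xy p by (simp add: fl_def g_def Jp_def dist_commute)
  next
    case False
    thus ?thesis by (auto simp: fl_def)
  qed
  have "jump_energy J D u = ennreal (1/2) * (\<integral>\<^sup>+p. f p \<partial>?M)" unfolding jump_energy_def f_def ..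
  also have "(\<integral>\<^sup>+p. f p \<partial>?M) = (\<integral>\<^sup>+p. ft p \<partial>?M) + (\<integral>\<^sup>+p. fl p \<partial>?M)"
    unfolding split by (rule nn_integral_add) measurable
  also have "(\<integral>\<^sup>+p. fl p \<partial>?M) \<le> (\<integral>\<^sup>+p. g p + g (snd p, fst p) \<partial>?M)"
    by (rule nn_integral_mono) (rule fl_le)
  also have "(\<integral>\<^sup>+p. g p + g (snd p, fst p) \<partial>?M) = (\<integral>\<^sup>+p. g p \<partial>?M) + (\<integral>\<^sup>+p. g (snd p, fst p) \<partial>?M)"
    by (rule nn_integral_add) measurable
  also have "(\<integral>\<^sup>+p. g (snd p, fst p) \<partial>?M) = (\<integral>\<^sup>+p. g p \<partial>?M)" by (rule nn_swap) (rule gm)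
  finally have "jump_energy J D u \<le> ennreal (1/2) * ((\<integral>\<^sup>+p. ft p \<partial>?M) + ((\<integral>\<^sup>+p. g p \<partial>?M) + (\<integral>\<^sup>+p. g p \<partial>?M)))"
    by (simp add: mult_left_mono add_left_mono)
  also have "\<dots> = jump_energy (trunc_kernel \<rho> J) D u + (\<integral>\<^sup>+p. g p \<partial>?M)"
  proof -
    have "jump_energy (trunc_kernel \<rho> J) D u = ennreal (1/2) * (\<integral>\<^sup>+p. ft p \<partial>?M)"
      unfolding jump_energy_def ft_def ..
    moreover have "ennreal (1/2) * (X + X) = X" for X :: ennreal
    proof -
      have h: "ennreal (1/2) * 2 = 1" using ennreal_mult[of "1/2" 2] by simp
      have "ennreal (1/2) * (X + X) = (ennreal (1/2) * 2) * X" by (simp add: mult_2[symmetric] mult.assoc)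
      thus ?thesis using h by simp
    qed
    ultimately show ?thesis by (simp add: distrib_left)
  qed
  also have "(\<integral>\<^sup>+p. g p \<partial>?M) = (\<integral>\<^sup>+x. \<integral>\<^sup>+y. g (x, y) \<partial>lborel \<partial>lborel)"
    by (rule lborel.nn_integral_fst[symmetric]) (rule gm)
  also have "\<dots> = (\<integral>\<^sup>+x. indicator D x * ennreal (2 * (u x)\<^sup>2) *
          (\<integral>\<^sup>+y. indicator D y * indicator {y. \<rho> \<le> dist x y} y * ennreal (J x y) \<partial>lborel) \<partial>lborel)"
  proof (rule nn_integral_cong)
    fix x :: 'a
    show "(\<integral>\<^sup>+y. g (x, y) \<partial>lborel) = indicator D x * ennreal (2 * (u x)\<^sup>2) *
          (\<integral>\<^sup>+y. indicator D y * indicator {y. \<rho> \<le> dist x y} y * ennreal (J x y) \<partial>lborel)"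
    proof (cases "x \<in> D")
      case xD: True
      have "(\<integral>\<^sup>+y. g (x, y) \<partial>lborel) = (\<integral>\<^sup>+y. ennreal (2 * (u x)\<^sup>2) *
         (indicator D y * indicator {y. \<rho> \<le> dist x y} y * ennreal (Jp (x, y))) \<partial>lborel)"
      proof (rule nn_integral_cong)
        fix y
        show "g (x, y) = ennreal (2 * (u x)\<^sup>2) * (indicator D y * indicator {y. \<rho> \<le> dist x y} y * ennreal (Jp (x, y)))"
        proof (cases "y \<in> D \<and> \<rho> \<le> dist x y")
          case True
          hence "x \<noteq> y" using \<rho> by auto
          hence "0 \<le> J x y" using Jpos True xD by auto
          thus ?thesis using True xD by (simp add: g_def Jp_def ennreal_mult)
        qed (auto simp: g_def)
      qed
      also have "\<dots> = ennreal (2 * (u x)\<^sup>2) *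
          (\<integral>\<^sup>+y. indicator D y * indicator {y. \<rho> \<le> dist x y} y * ennreal (Jp (x, y)) \<partial>lborel)"
        by (rule nn_integral_cmult) measurable
      also have "(\<integral>\<^sup>+y. indicator D y * indicator {y. \<rho> \<le> dist x y} y * ennreal (Jp (x, y)) \<partial>lborel)
          = (\<integral>\<^sup>+y. indicator D y * indicator {y. \<rho> \<le> dist x y} y * ennreal (J x y) \<partial>lborel)"
        by (rule nn_integral_cong) (auto simp: Jp_def xD indicator_def)
      finally show ?thesis using xD by simp
    next
      case False
      thus ?thesis by (simp add: g_def)
    qed
  qed
  finally show ?thesis .
qed

locale setting =
  fixes D :: "'a::euclidean_space set" and J :: "'a \<Rightarrow> 'a \<Rightarrow> real" and \<alpha> \<kappa> R0 :: real
    and \<Phi> :: "real \<Rightarrow> real" and A0 :: ereal and C1 :: real and \<beta> C\<beta> s Cs :: real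
  assumes Do: "open D" and Fne: "frontier D \<noteq> {}"
    and \<alpha>: "0 < \<alpha>" and \<kappa>: "0 < \<kappa>" "\<kappa> < 1" and R0: "0 < R0"
    and fat: "\<forall>x\<in>closure D. \<forall>r. 0 < r \<and> r < R0 \<longrightarrow> (\<exists>z\<in>D. ball z (\<kappa> * r) \<subseteq> D \<inter> ball x r)"
    and \<Phi>mono: "mono_on {0..} \<Phi>" and \<Phi>ge: "\<forall>t\<ge>0. 1 \<le> \<Phi> t" and \<Phi>cont: "continuous_on {0..} \<Phi>"
    and \<beta>: "0 \<le> \<beta>" "\<beta> < \<alpha>" and \<Phi>idx: "\<forall>s r. 0 < s \<and> s \<le> r \<longrightarrow> \<Phi> r / \<Phi> s \<le> C\<beta> * (r / s) powr \<beta>"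
    and s: "0 \<le> s" "0 \<le> Cs" "\<beta> < real DIM('a) - s"
    and cov: "\<forall>x\<in>frontier D. \<forall>r R. 0 < r \<and> r < R \<longrightarrow> real (covering_number (frontier D \<inter> ball x R) r) \<le> Cs * (R / r) powr s"
    and A0: "0 < A0" and C1: "1 < C1"
    and Jb: "\<forall>x\<in>D. \<forall>y\<in>D. x \<noteq> y \<longrightarrow> 1 / C1 \<le> J x y * dist x y powr (real DIM('a) + \<alpha>) / \<Phi> (kernel_arg D A0 x y) \<and>
               J x y * dist x y powr (real DIM('a) + \<alpha>) / \<Phi> (kernel_arg D A0 x y) \<le> C1"
begin

definition \<delta> :: "'a \<Rightarrow> real" where "\<delta> x = infdist x (frontier D)"
definition m :: "real \<Rightarrow> real" where "m t = real_of_ereal (min (ereal t) A0)"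
definition q :: "real \<Rightarrow> 'a \<Rightarrow> real" where "q r x = m r / m (\<delta> x)"

lemma m_cases:
  obtains a where "a > 0" "\<And>t. m t = min t a" "\<And>t. t \<ge> 0 \<Longrightarrow> min (ereal t) A0 = ereal (min t a)"
  | "\<And>t. m t = t" "\<And>t. min (ereal t) A0 = ereal t"
proof (cases A0)
  case (real a)
  show ?thesis
  proof (rule that(1)[of a])
    show "0 < a" using A0 real by simp
    show "m t = min t a" for t unfolding m_def using real by (simp add: min_def)
    show "min (ereal t) A0 = ereal (min t a)" if "t \<ge> 0" for t using real by (simp add: min_def)
  qed
next
  case PInf
  show ?thesis
  proof (rule that(2))
    show "m t = t" for t unfolding m_def using PInf by simp
    show "min (ereal t) A0 = ereal t" for t using PInf by simp
  qed
next
  case MInf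
  then show ?thesis using A0 by simp
qed

lemma min_A0: "t \<ge> 0 \<Longrightarrow> min (ereal t) A0 = ereal (m t)"
  by (cases rule: m_cases) auto

lemma m_nonneg: "t \<ge> 0 \<Longrightarrow> 0 \<le> m t" by (cases rule: m_cases) auto
lemma m_le: "t \<ge> 0 \<Longrightarrow> m t \<le> t" by (cases rule: m_cases) auto
lemma m_pos: "t > 0 \<Longrightarrow> 0 < m t" by (cases rule: m_cases) auto
lemma m_0: "m 0 = 0" by (cases rule: m_cases) auto
lemma m_mono: "t \<le> u \<Longrightarrow> m t \<le> m u" by (cases rule: m_cases) auto
lemma m_scale: "0 \<le> c \<Longrightarrow> c \<le> 1 \<Longrightarrow> t \<ge> 0 \<Longrightarrow> c * m t \<le> m (c * t)"
proof (cases rule: m_cases)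
  case (1 a)
  assume c: "0 \<le> c" "c \<le> 1" and t: "t \<ge> 0"
  have "c*t \<le> t" using c t by (simp add: mult_left_le_one_le)
  moreover have "c*a \<le> a" using c 1(1) by (simp add: mult_left_le_one_le)
  ultimately have "c * min t a \<le> min (c*t) a"
    using c t 1(1) by (cases "t \<le> a") (auto simp: min_def intro!: mult_left_mono)
  thus ?thesis using 1 by simp
qed auto

lemma m_ratio: "t > 0 \<Longrightarrow> u \<ge> 0 \<Longrightarrow> m u / m t \<le> max 1 (u / t)"
proof (cases rule: m_cases)
  case (1 a)
  assume t: "t > 0" and u: "u \<ge> 0"
  show ?thesis
  proof (cases "t \<le> a")
    case True
    hence "m u / m t = min u a / t" using 1 by simp
    also have "\<dots> \<le> u / t" using t by (intro divide_right_mono) auto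
    finally show ?thesis by simp
  next
    case False
    hence "m u / m t = min u a / a" using 1 by simp
    also have "\<dots> \<le> 1" using 1 by simp
    finally show ?thesis by simp
  qed
qed auto

lemma \<delta>_pos: "x \<in> D \<Longrightarrow> 0 < \<delta> x"
  unfolding \<delta>_def using Do Fne
  by (intro infdist_pos_not_in_closed) (auto simp: frontier_def interior_open)

lemma \<delta>_nonneg: "0 \<le> \<delta> x" unfolding \<delta>_def by (rule infdist_nonneg)

lemma \<delta>_lip: "\<delta> x \<le> \<delta> y + dist x y" unfolding \<delta>_def by (rule infdist_triangle)

lemma \<delta>_ball: assumes "ball w e \<subseteq> D" shows "e \<le> \<delta> w"
proof -
  have "e \<le> dist w f" if "f \<in> frontier D" for f
  proof (rule ccontr)
    assume "\<not> e \<le> dist w f"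
    hence "f \<in> ball w e" by auto
    hence "f \<in> D" using assms by auto
    thus False using that Do by (auto simp: frontier_def interior_open)
  qed
  thus ?thesis unfolding \<delta>_def infdist_notempty[OF Fne] using Fne by (intro cINF_greatest) auto
qed

lemma delta_e_eq: "delta_e D x = ereal (\<delta> x)"
  using Fne by (simp add: delta_e_def \<delta>_def)

lemma karg_eq:
  assumes "x \<in> D" "y \<in> D"
  shows "kernel_arg D A0 x y = (m (dist x y))\<^sup>2 / (m (\<delta> x) * m (\<delta> y))"
proof -
  have "m (\<delta> x) > 0" "m (\<delta> y) > 0" using assms \<delta>_pos m_pos by auto
  thus ?thesis unfolding kernel_arg_def delta_e_eq
    by (simp add: min_A0 \<delta>_nonneg power2_eq_square)
qed

lemma \<Phi>_mono: "0 \<le> a \<Longrightarrow> a \<le> b \<Longrightarrow> \<Phi> a \<le> \<Phi> b"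
  using \<Phi>mono by (auto simp: mono_on_def)

lemma \<Phi>_ge1: "0 \<le> a \<Longrightarrow> 1 \<le> \<Phi> a" using \<Phi>ge by auto

lemma C\<beta>_ge1: "1 \<le> C\<beta>"
  using \<Phi>idx[rule_format, of 1 1] \<Phi>_ge1[of 1] by simp

lemma \<Phi>_scale: assumes "0 < t" "1 \<le> c" shows "\<Phi> (c * t) \<le> C\<beta> * c powr \<beta> * \<Phi> t"
proof -
  have "\<Phi> (c*t) / \<Phi> t \<le> C\<beta> * (c*t/t) powr \<beta>" using \<Phi>idx[rule_format, of t "c*t"] assms by auto
  also have "c*t/t = c" using assms by simp
  moreover have "\<Phi> t > 0" using \<Phi>_ge1[of t] assms by auto
  ultimately show ?thesis using assms by (simp add: field_simps)
qed

lemma \<Phi>_meas: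
  assumes f: "f \<in> borel_measurable M" and nn: "\<And>x. 0 \<le> f x"
  shows "(\<lambda>x. \<Phi> (f x)) \<in> borel_measurable M"
proof -
  have "continuous_on UNIV (\<lambda>t. \<Phi> (max 0 t))"
    by (rule continuous_on_compose2[OF \<Phi>cont]) (auto intro!: continuous_intros)
  hence "(\<lambda>t. \<Phi> (max 0 t)) \<in> borel_measurable borel" by (rule borel_measurable_continuous_onI)
  from measurable_compose[OF f this] have "(\<lambda>x. \<Phi> (max 0 (f x))) \<in> borel_measurable M" .
  moreover have "(\<lambda>x. \<Phi> (max 0 (f x))) = (\<lambda>x. \<Phi> (f x))" using nn by (auto simp: max_def)
  ultimately show ?thesis by simp
qed

lemma \<delta>_meas[measurable]: "\<delta> \<in> borel_measurable borel"
  unfolding \<delta>_def[abs_def] by measurable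

lemma m_meas[measurable]: "m \<in> borel_measurable borel"
  unfolding m_def[abs_def] by measurable

lemma q_nonneg: "r \<ge> 0 \<Longrightarrow> 0 \<le> q r x"
  unfolding q_def using m_nonneg \<delta>_nonneg by simp

lemma \<Phi>q_meas[measurable]: "r \<ge> 0 \<Longrightarrow> (\<lambda>x. \<Phi> (q r x)) \<in> borel_measurable borel"
  by (rule \<Phi>_meas) (auto simp: q_def[abs_def] q_nonneg[unfolded q_def])

end

context setting begin

lemma karg_nonneg: "x \<in> D \<Longrightarrow> y \<in> D \<Longrightarrow> 0 \<le> kernel_arg D A0 x y"
  using karg_eq m_nonneg \<delta>_nonneg by simp

lemma J_upper:
  assumes x: "x \<in> D" and y: "y \<in> D" and r: "0 < r" and L: "r \<le> dist x y"
  shows "J x y \<le> C1 * C\<beta> * \<Phi> (q r x) * r powr (-\<beta>) *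
           (dist x y powr (\<beta> - real DIM('a) - \<alpha>) + dist x y powr (2*\<beta> - real DIM('a) - \<alpha>) * \<delta> y powr (-\<beta>))"
proof -
  define L where "L = dist x y"
  define k where "k = kernel_arg D A0 x y"
  have Lp: "0 < L" using r L unfolding L_def by linarith
  have xy: "x \<noteq> y" using Lp unfolding L_def by auto
  have k0: "0 \<le> k" unfolding k_def using karg_nonneg x y .
  have \<Phi>k: "0 < \<Phi> k" using \<Phi>_ge1[OF k0] by simp
  have "J x y * L powr (real DIM('a) + \<alpha>) / \<Phi> k \<le> C1" using Jb x y xy unfolding L_def k_def by blast
  hence "J x y * L powr (real DIM('a) + \<alpha>) \<le> C1 * \<Phi> k" using \<Phi>k by (simp add: divide_le_eq)
  moreover have P: "0 < L powr (real DIM('a) + \<alpha>)" using Lp by simp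
  ultimately have "J x y \<le> C1 * \<Phi> k / L powr (real DIM('a) + \<alpha>)" by (simp add: pos_le_divide_eq)
  also have "\<dots> = C1 * \<Phi> k * L powr (-(real DIM('a) + \<alpha>))" by (simp only: powr_minus divide_inverse)
  finally have J1: "J x y \<le> C1 * \<Phi> k * L powr (-(real DIM('a) + \<alpha>))" .
  define a where "a = m r"
  define b where "b = m (\<delta> x)"
  define c where "c = m (\<delta> y)"
  define e where "e = m L"
  have pos: "a > 0" "b > 0" "c > 0" "e > 0"
    unfolding a_def b_def c_def e_def using m_pos r Lp \<delta>_pos x y by auto
  have kfac: "k = (a/b) * ((e/a) * (e/c))"
    unfolding k_def using karg_eq[OF x y] pos by (simp add: L_def a_def b_def c_def e_def power2_eq_square field_simps)
  have P1: "1 \<le> e/a" using m_mono[OF L] pos unfolding a_def e_def L_def by simp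
  have P2: "e/a \<le> L/r" using m_ratio[of r L] r Lp L unfolding a_def e_def L_def by (simp add: max_def split: if_splits)
  have Q: "e/c \<le> max 1 (L / \<delta> y)" using m_ratio[of "\<delta> y" L] \<delta>_pos[OF y] Lp unfolding c_def e_def by simp
  define Mx where "Mx = (e/a) * max 1 (e/c)"
  have "1*1 \<le> (e/a) * max 1 (e/c)" by (rule mult_mono) (use P1 in auto)
  hence Mx1: "1 \<le> Mx" unfolding Mx_def by simp
  have "k = ((a/b)*(e/a))*(e/c)" unfolding kfac by (simp only: mult.assoc)
  also have "\<dots> \<le> ((a/b)*(e/a))*max 1 (e/c)" using pos by (intro mult_left_mono) auto
  also have "\<dots> = Mx * (a/b)" unfolding Mx_def by (simp only: ac_simps)
  finally have "k \<le> Mx * (a/b)" .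
  hence "\<Phi> k \<le> \<Phi> (Mx * (a/b))" by (rule \<Phi>_mono[OF k0])
  also have "\<dots> \<le> C\<beta> * Mx powr \<beta> * \<Phi> (a/b)" using pos Mx1 by (intro \<Phi>_scale) auto
  also have "Mx powr \<beta> \<le> (L/r) powr \<beta> * (1 + (L / \<delta> y) powr \<beta>)"
  proof -
    have "Mx powr \<beta> = (e/a) powr \<beta> * (max 1 (e/c)) powr \<beta>" unfolding Mx_def by (rule powr_mult)
    moreover have A: "(e/a) powr \<beta> \<le> (L/r) powr \<beta>" using P2 pos \<beta> by (intro powr_mono2) auto
    moreover have "(max 1 (e/c)) powr \<beta> \<le> (max 1 (L / \<delta> y)) powr \<beta>" using Q \<beta> by (intro powr_mono2) auto
    moreover have "(max 1 (L / \<delta> y)) powr \<beta> \<le> 1 + (L / \<delta> y) powr \<beta>" by (simp add: max_def)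
    ultimately show ?thesis by (simp add: mult_mono)
  qed
  finally have \<Phi>k_le: "\<Phi> k \<le> C\<beta> * ((L/r) powr \<beta> * (1 + (L / \<delta> y) powr \<beta>)) * \<Phi> (q r x)"
    using C\<beta>_ge1 \<Phi>_ge1[of "a/b"] pos unfolding q_def a_def b_def by (simp add: mult_left_mono mult_right_mono)
  have "J x y \<le> C1 * (C\<beta> * ((L/r) powr \<beta> * (1 + (L / \<delta> y) powr \<beta>)) * \<Phi> (q r x)) * L powr (-(real DIM('a) + \<alpha>))"
  proof -
    have "C1 * \<Phi> k * L powr (-(real DIM('a) + \<alpha>)) \<le> C1 * (C\<beta> * ((L/r) powr \<beta> * (1 + (L / \<delta> y) powr \<beta>)) * \<Phi> (q r x)) * L powr (-(real DIM('a) + \<alpha>))"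
      using \<Phi>k_le C1 by (intro mult_right_mono mult_left_mono) auto
    thus ?thesis using J1 by linarith
  qed
  also have "\<dots> = C1 * C\<beta> * \<Phi> (q r x) * r powr (-\<beta>) *
           (L powr (\<beta> - real DIM('a) - \<alpha>) + L powr (2*\<beta> - real DIM('a) - \<alpha>) * \<delta> y powr (-\<beta>))"
  proof -
    have e1: "(L/r) powr \<beta> = L powr \<beta> * r powr (-\<beta>)" using Lp r unfolding powr_divide powr_minus by (simp add: divide_inverse)
    have e2: "(L / \<delta> y) powr \<beta> = L powr \<beta> * \<delta> y powr (-\<beta>)" using Lp \<delta>_pos[OF y] unfolding powr_divide powr_minus by (simp add: divide_inverse)
    have x3: "\<beta> - real DIM('a) - \<alpha> = \<beta> + (-(real DIM('a) + \<alpha>))" by simp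
    have e3: "L powr (\<beta> - real DIM('a) - \<alpha>) = L powr \<beta> * L powr (-(real DIM('a) + \<alpha>))"
      unfolding x3 by (rule powr_add)
    have x4: "2*\<beta> - real DIM('a) - \<alpha> = \<beta> + (\<beta> + (-(real DIM('a) + \<alpha>)))" by simp
    have e4: "L powr (2*\<beta> - real DIM('a) - \<alpha>) = L powr \<beta> * L powr \<beta> * L powr (-(real DIM('a) + \<alpha>))"
      unfolding x4 by (simp only: powr_add mult.assoc)
    show ?thesis unfolding e1 e2 e3 e4 by (simp add: algebra_simps)
  qed
  finally show ?thesis unfolding L_def .
qed

end

context setting begin

definition KA where "KA = unit_ball_vol (real DIM('a)) + (Cs * 6 powr s * unit_ball_vol (real DIM('a)) * 3 ^ DIM('a)) * 2 powr \<beta>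
           / (1 - 2 powr (\<beta> - (real DIM('a) - s)))"

definition KW where "KW = C1 * C\<beta> * ((unit_ball_vol (real DIM('a)) * 2 powr (real DIM('a)) + KA * 2 powr (real DIM('a) - \<beta>)) / (1 - 2 powr (\<beta> - \<alpha>)))"

lemma KA_nonneg: "0 \<le> KA"
proof -
  have "2 powr (\<beta> - (real DIM('a) - s)) < 1" using s by (simp add: powr_less_one)
  thus ?thesis unfolding KA_def using s by (intro add_nonneg_nonneg divide_nonneg_nonneg) auto
qed

lemma KW_nonneg: "0 \<le> KW"
proof -
  have "2 powr (\<beta> - \<alpha>) < 1" using \<beta> by (simp add: powr_less_one)
  thus ?thesis unfolding KW_def using C1 C\<beta>_ge1 KA_nonneg
    by (intro mult_nonneg_nonneg add_nonneg_nonneg divide_nonneg_nonneg) auto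
qed

lemma int_delta: "R > 0 \<Longrightarrow> (\<integral>\<^sup>+y. indicator (ball x R) y * ennreal (\<delta> y powr (-\<beta>)) \<partial>lborel) \<le> ennreal (KA * R powr (real DIM('a) - \<beta>))"
  unfolding \<delta>_def KA_def using assouad_int[OF Fne cov s(1) s(2) \<beta>(1) s(3)] by blast

lemma int_one: "R > 0 \<Longrightarrow> (\<integral>\<^sup>+y. indicator (ball (x::'a) R) y * 1 \<partial>lborel) \<le> ennreal (unit_ball_vol (real DIM('a)) * R powr (real DIM('a)))"
  by (simp add: emeasure_ball powr_realpow)

lemma W_bound:
  assumes x: "x \<in> D" and r: "0 < r" "r \<le> \<rho>"
  shows "(\<integral>\<^sup>+y. indicator D y * indicator {y. \<rho> \<le> dist x y} y * ennreal (J x y) \<partial>lborel)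
           \<le> ennreal (KW * \<Phi> (q r x) * r powr (-\<alpha>))"
proof -
  let ?d = "real DIM('a)"
  let ?w = "unit_ball_vol ?d"
  define c where "c = C1 * C\<beta> * \<Phi> (q r x) * r powr (-\<beta>)"
  define p1 where "p1 = \<beta> - ?d - \<alpha>"
  define p2 where "p2 = 2*\<beta> - ?d - \<alpha>"
  have c0: "0 \<le> c" unfolding c_def using C1 C\<beta>_ge1 \<Phi>_ge1[OF q_nonneg[of r x]] r by simp
  have Dm[measurable]: "D \<in> sets borel" using Do by (rule borel_open)
  have pw: "indicator D y * indicator {y. \<rho> \<le> dist x y} y * ennreal (J x y)
     \<le> ennreal c * (indicator {y. \<rho> \<le> dist x y} y * ennreal (dist x y powr p1) * 1
          + indicator {y. \<rho> \<le> dist x y} y * ennreal (dist x y powr p2) * ennreal (\<delta> y powr (-\<beta>)))" for y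
  proof (cases "y \<in> D \<and> \<rho> \<le> dist x y")
    case True
    have "J x y \<le> c * (dist x y powr p1 + dist x y powr p2 * \<delta> y powr (-\<beta>))"
      using J_upper[OF x _ r(1), of y] True r unfolding c_def p1_def p2_def by auto
    hence "ennreal (J x y) \<le> ennreal (c * (dist x y powr p1 + dist x y powr p2 * \<delta> y powr (-\<beta>)))"
      by (rule ennreal_leI)
    also have "\<dots> = ennreal c * (ennreal (dist x y powr p1) + ennreal (dist x y powr p2) * ennreal (\<delta> y powr (-\<beta>)))"
      using c0 by (simp add: ennreal_mult ennreal_plus)
    finally show ?thesis using True by simp
  next
    case False
    thus ?thesis by auto
  qed
  have "(\<integral>\<^sup>+y. indicator D y * indicator {y. \<rho> \<le> dist x y} y * ennreal (J x y) \<partial>lborel)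
      \<le> (\<integral>\<^sup>+y. ennreal c * (indicator {y. \<rho> \<le> dist x y} y * ennreal (dist x y powr p1) * 1
          + indicator {y. \<rho> \<le> dist x y} y * ennreal (dist x y powr p2) * ennreal (\<delta> y powr (-\<beta>))) \<partial>lborel)"
    by (rule nn_integral_mono) (rule pw)
  also have "\<dots> = ennreal c * (\<integral>\<^sup>+y. indicator {y. \<rho> \<le> dist x y} y * ennreal (dist x y powr p1) * 1
          + indicator {y. \<rho> \<le> dist x y} y * ennreal (dist x y powr p2) * ennreal (\<delta> y powr (-\<beta>)) \<partial>lborel)"
    by (rule nn_integral_cmult) measurable
  also have "(\<integral>\<^sup>+y. indicator {y. \<rho> \<le> dist x y} y * ennreal (dist x y powr p1) * 1
          + indicator {y. \<rho> \<le> dist x y} y * ennreal (dist x y powr p2) * ennreal (\<delta> y powr (-\<beta>)) \<partial>lborel)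
     = (\<integral>\<^sup>+y. indicator {y. \<rho> \<le> dist x y} y * ennreal (dist x y powr p1) * 1 \<partial>lborel)
          + (\<integral>\<^sup>+y. indicator {y. \<rho> \<le> dist x y} y * ennreal (dist x y powr p2) * ennreal (\<delta> y powr (-\<beta>)) \<partial>lborel)"
    by (rule nn_integral_add) measurable
  also have "(\<integral>\<^sup>+y. indicator {y. \<rho> \<le> dist x y} y * ennreal (dist x y powr p1) * 1 \<partial>lborel)
      \<le> ennreal (?w * 2 powr ?d * \<rho> powr (p1 + ?d) / (1 - 2 powr (p1 + ?d)))"
  proof (rule dyadic_tail)
    show "(\<lambda>y. 1::ennreal) \<in> borel_measurable borel" by simp
    show "\<And>R. 0 < R \<Longrightarrow> (\<integral>\<^sup>+y. indicator (ball x R) y * 1 \<partial>lborel) \<le> ennreal (?w * R powr ?d)"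
      by (rule int_one)
    show "p1 + ?d < 0" unfolding p1_def using \<beta> by simp
    show "p1 \<le> 0" unfolding p1_def using \<beta> by simp
    show "0 < \<rho>" using r by simp
    show "0 \<le> ?w" by simp
  qed
  also have "(\<integral>\<^sup>+y. indicator {y. \<rho> \<le> dist x y} y * ennreal (dist x y powr p2) * ennreal (\<delta> y powr (-\<beta>)) \<partial>lborel)
      \<le> ennreal (KA * 2 powr (?d - \<beta>) * \<rho> powr (p2 + (?d - \<beta>)) / (1 - 2 powr (p2 + (?d - \<beta>))))"
  proof (rule dyadic_tail)
    show "(\<lambda>y. ennreal (\<delta> y powr (-\<beta>))) \<in> borel_measurable borel" by measurable
    show "\<And>R. 0 < R \<Longrightarrow> (\<integral>\<^sup>+y. indicator (ball x R) y * ennreal (\<delta> y powr (-\<beta>)) \<partial>lborel) \<le> ennreal (KA * R powr (?d - \<beta>))"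
      by (rule int_delta)
    show "p2 + (?d - \<beta>) < 0" unfolding p2_def using \<beta> by simp
    show "p2 \<le> 0" unfolding p2_def using \<beta> s by simp
    show "0 < \<rho>" using r by simp
    show "0 \<le> KA" by (rule KA_nonneg)
  qed
  finally have main: "(\<integral>\<^sup>+y. indicator D y * indicator {y. \<rho> \<le> dist x y} y * ennreal (J x y) \<partial>lborel)
      \<le> ennreal c * (ennreal (?w * 2 powr ?d * \<rho> powr (p1 + ?d) / (1 - 2 powr (p1 + ?d)))
           + ennreal (KA * 2 powr (?d - \<beta>) * \<rho> powr (p2 + (?d - \<beta>)) / (1 - 2 powr (p2 + (?d - \<beta>)))))"
    by (simp add: mult_left_mono add_mono)
  have ex1: "p1 + ?d = \<beta> - \<alpha>" unfolding p1_def by simp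
  have ex2: "p2 + (?d - \<beta>) = \<beta> - \<alpha>" unfolding p2_def by simp
  have q1: "2 powr (\<beta> - \<alpha>) < 1" using \<beta> by (simp add: powr_less_one)
  have "ennreal c * (ennreal (?w * 2 powr ?d * \<rho> powr (p1 + ?d) / (1 - 2 powr (p1 + ?d)))
           + ennreal (KA * 2 powr (?d - \<beta>) * \<rho> powr (p2 + (?d - \<beta>)) / (1 - 2 powr (p2 + (?d - \<beta>)))))
     = ennreal (c * ((?w * 2 powr ?d + KA * 2 powr (?d - \<beta>)) / (1 - 2 powr (\<beta> - \<alpha>)) * \<rho> powr (\<beta> - \<alpha>)))"
  proof -
    define a1 where "a1 = ?w * 2 powr ?d * \<rho> powr (\<beta> - \<alpha>) / (1 - 2 powr (\<beta> - \<alpha>))"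
    define a2 where "a2 = KA * 2 powr (?d - \<beta>) * \<rho> powr (\<beta> - \<alpha>) / (1 - 2 powr (\<beta> - \<alpha>))"
    have a12: "0 \<le> a1" "0 \<le> a2" unfolding a1_def a2_def using q1 KA_nonneg by auto
    have "ennreal a1 + ennreal a2 = ennreal (a1 + a2)" using a12 by (rule ennreal_plus[symmetric])
    hence "ennreal c * (ennreal a1 + ennreal a2) = ennreal c * ennreal (a1 + a2)" by simp
    also have "\<dots> = ennreal (c * (a1 + a2))" by (rule ennreal_mult'[symmetric]) (rule c0)
    finally have "ennreal c * (ennreal a1 + ennreal a2) = ennreal (c * (a1 + a2))" .
    moreover have "a1 + a2 = (?w * 2 powr ?d + KA * 2 powr (?d - \<beta>)) / (1 - 2 powr (\<beta> - \<alpha>)) * \<rho> powr (\<beta> - \<alpha>)"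
      unfolding a1_def a2_def by (simp add: add_divide_distrib[symmetric] distrib_right)
    ultimately show ?thesis unfolding ex1 ex2 a1_def a2_def by simp
  qed
  also have "\<dots> \<le> ennreal (KW * \<Phi> (q r x) * r powr (-\<alpha>))"
  proof (rule ennreal_leI)
    have "\<rho> powr (\<beta> - \<alpha>) \<le> r powr (\<beta> - \<alpha>)" using r \<beta> by (intro powr_mono2') auto
    hence "r powr (-\<beta>) * \<rho> powr (\<beta> - \<alpha>) \<le> r powr (-\<beta>) * r powr (\<beta> - \<alpha>)" by (simp add: mult_left_mono)
    also have "\<dots> = r powr (-\<alpha>)" by (simp add: powr_add[symmetric])
    finally have rr: "r powr (-\<beta>) * \<rho> powr (\<beta> - \<alpha>) \<le> r powr (-\<alpha>)" .
    define K0 where "K0 = (?w * 2 powr ?d + KA * 2 powr (?d - \<beta>)) / (1 - 2 powr (\<beta> - \<alpha>))"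
    have K00: "0 \<le> K0" unfolding K0_def using q1 KA_nonneg by (intro divide_nonneg_nonneg add_nonneg_nonneg) auto
    have "c * (K0 * \<rho> powr (\<beta> - \<alpha>)) = (C1 * C\<beta> * \<Phi> (q r x) * K0) * (r powr (-\<beta>) * \<rho> powr (\<beta> - \<alpha>))"
      unfolding c_def by (simp add: ac_simps)
    also have "\<dots> \<le> (C1 * C\<beta> * \<Phi> (q r x) * K0) * r powr (-\<alpha>)"
      using rr C1 C\<beta>_ge1 \<Phi>_ge1[OF q_nonneg[of r x]] r K00 by (intro mult_left_mono) auto
    also have "\<dots> = KW * \<Phi> (q r x) * r powr (-\<alpha>)" unfolding KW_def K0_def by (simp add: ac_simps)
    finally show "c * ((?w * 2 powr ?d + KA * 2 powr (?d - \<beta>)) / (1 - 2 powr (\<beta> - \<alpha>)) * \<rho> powr (\<beta> - \<alpha>))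
       \<le> KW * \<Phi> (q r x) * r powr (-\<alpha>)" unfolding K0_def .
  qed
  finally show ?thesis using main by (rule order_trans[rotated])
qed

end

context setting begin

definition Kq where "Kq = max (C\<beta> * (64/\<kappa>\<^sup>2) powr \<beta>) (\<Phi> (8/\<kappa>))"

lemma \<Phi>q_le:
  assumes x: "x \<in> D" and w: "w \<in> D" and xw: "x \<noteq> w" and r: "0 < r"
    and L: "dist x w < r/2" and dw: "\<kappa>*r/4 \<le> \<delta> w"
  shows "\<Phi> (q r x) \<le> Kq * \<Phi> (kernel_arg D A0 x w)"
proof -
  define k where "k = kernel_arg D A0 x w"
  have k0: "0 \<le> k" unfolding k_def using karg_nonneg x w .
  have \<Phi>k1: "1 \<le> \<Phi> k" using \<Phi>_ge1[OF k0] .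
  define a where "a = m r"
  define b where "b = m (\<delta> x)"
  define c where "c = m (\<delta> w)"
  define e where "e = m (dist x w)"
  have Lp: "0 < dist x w" using xw by simp
  have pos: "a > 0" "b > 0" "c > 0" "e > 0"
    unfolding a_def b_def c_def e_def using m_pos r Lp \<delta>_pos x w by auto
  have kdef: "k = e\<^sup>2 / (b * c)" unfolding k_def e_def b_def c_def using karg_eq[OF x w] .
  have qab: "q r x = a / b" unfolding q_def a_def b_def ..
  show ?thesis
  proof (cases "\<delta> x \<le> \<kappa>*r/8")
    case True
    have lip: "\<delta> w \<le> \<delta> x + dist x w" using \<delta>_lip[of w x] by (simp add: dist_commute)
    have L1: "\<kappa>*r/8 \<le> dist x w" using lip True dw by linarith
    have kr: "\<kappa>*r \<le> r" using \<kappa> r by (simp add: mult_left_le_one_le)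
    have dwr: "\<delta> w \<le> r" using lip True L kr r by linarith
    have "(\<kappa>/8) * a \<le> m ((\<kappa>/8) * r)" unfolding a_def using \<kappa> r by (intro m_scale) auto
    also have "\<dots> \<le> e" unfolding e_def using L1 by (intro m_mono) simp
    finally have ea: "(\<kappa>/8) * a \<le> e" .
    have ca: "c \<le> a" unfolding c_def a_def using dwr by (rule m_mono)
    have "(\<kappa>/8)\<^sup>2 * (a/b) = ((\<kappa>/8) * a)\<^sup>2 / (b * a)" using pos by (simp add: power2_eq_square field_simps)
    also have "\<dots> \<le> e\<^sup>2 / (b * a)" using ea pos \<kappa> by (intro divide_right_mono power_mono) auto
    also have "\<dots> \<le> e\<^sup>2 / (b * c)" using pos ca by (intro divide_left_mono mult_left_mono) auto
    finally have kq: "(\<kappa>/8)\<^sup>2 * (a/b) \<le> k" unfolding kdef .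
    have c1: "1 \<le> 64/\<kappa>\<^sup>2"
    proof -
      have "\<kappa>\<^sup>2 \<le> 1" using \<kappa> by (simp add: power_le_one)
      thus ?thesis using \<kappa> by (simp add: field_simps)
    qed
    define t where "t = (\<kappa>/8)\<^sup>2 * (a/b)"
    have t0: "0 < t" unfolding t_def using pos \<kappa> by simp
    have ab: "a/b = (64/\<kappa>\<^sup>2) * t" unfolding t_def using \<kappa> by (simp add: power2_eq_square field_simps)
    have "\<Phi> (a/b) \<le> C\<beta> * (64/\<kappa>\<^sup>2) powr \<beta> * \<Phi> t" unfolding ab by (rule \<Phi>_scale[OF t0 c1])
    hence "\<Phi> (a/b) \<le> C\<beta> * (64/\<kappa>\<^sup>2) powr \<beta> * \<Phi> ((\<kappa>/8)\<^sup>2 * (a/b))" unfolding t_def .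
    also have "\<dots> \<le> C\<beta> * (64/\<kappa>\<^sup>2) powr \<beta> * \<Phi> k"
      using kq pos C\<beta>_ge1 by (intro mult_left_mono \<Phi>_mono) auto
    also have "\<dots> \<le> Kq * \<Phi> k" unfolding Kq_def using \<Phi>k1 by (intro mult_right_mono) auto
    finally show ?thesis unfolding qab k_def .
  next
    case False
    have kr0: "0 < \<kappa>*r" using \<kappa> r by simp
    have dxp: "0 < \<delta> x" using False kr0 by linarith
    have "a/b \<le> max 1 (r / \<delta> x)" unfolding a_def b_def using m_ratio[OF dxp, of r] r by auto
    also have "\<dots> \<le> 8/\<kappa>"
    proof -
      have "r * \<kappa> \<le> 8 * \<delta> x" using False by (simp add: mult.commute)
      hence "r / \<delta> x \<le> 8/\<kappa>" using dxp \<kappa> by (simp add: divide_simps mult.commute)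
      moreover have "1 \<le> 8/\<kappa>" using \<kappa> by simp
      ultimately show ?thesis by simp
    qed
    finally have "\<Phi> (a/b) \<le> \<Phi> (8/\<kappa>)" using pos by (intro \<Phi>_mono) auto
    also have "\<dots> \<le> \<Phi> (8/\<kappa>) * \<Phi> k" using \<Phi>k1 \<Phi>_ge1[of "8/\<kappa>"] \<kappa> by simp
    also have "\<dots> \<le> Kq * \<Phi> k" unfolding Kq_def using \<Phi>k1 by (intro mult_right_mono) auto
    finally show ?thesis unfolding qab k_def .
  qed
qed

lemma Kq_ge1: "1 \<le> Kq"
  unfolding Kq_def using \<Phi>_ge1[of "8/\<kappa>"] \<kappa> by simp

lemma J_lower:
  assumes x: "x \<in> D" and w: "w \<in> D" and xw: "x \<noteq> w" and r: "0 < r"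
    and L: "dist x w < r/2" and dw: "\<kappa>*r/4 \<le> \<delta> w"
  shows "\<Phi> (q r x) * r powr (-(real DIM('a) + \<alpha>)) \<le> C1 * Kq * J x w"
proof -
  define k where "k = kernel_arg D A0 x w"
  have k0: "0 \<le> k" unfolding k_def using karg_nonneg x w .
  have \<Phi>k: "0 < \<Phi> k" using \<Phi>_ge1[OF k0] by simp
  have Lp: "0 < dist x w" using xw by simp
  have "1 / C1 \<le> J x w * dist x w powr (real DIM('a) + \<alpha>) / \<Phi> k" using Jb x w xw unfolding k_def by blast
  hence J1: "\<Phi> k \<le> C1 * (J x w * dist x w powr (real DIM('a) + \<alpha>))" using \<Phi>k C1 by (simp add: field_simps)
  have P: "0 < dist x w powr (real DIM('a) + \<alpha>)" using Lp by simp
  have "0 < C1 * (J x w * dist x w powr (real DIM('a) + \<alpha>))" using J1 \<Phi>k by linarith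
  hence "0 < J x w * dist x w powr (real DIM('a) + \<alpha>)" using C1 by (simp add: zero_less_mult_iff)
  hence Jpos: "0 \<le> J x w" using P by (simp add: zero_less_mult_iff)
  have "dist x w powr (real DIM('a) + \<alpha>) \<le> r powr (real DIM('a) + \<alpha>)" using L \<alpha> r by (intro powr_mono2) auto
  hence "C1 * (J x w * dist x w powr (real DIM('a) + \<alpha>)) \<le> C1 * (J x w * r powr (real DIM('a) + \<alpha>))"
    using Jpos C1 by (intro mult_left_mono) auto
  hence J2: "\<Phi> k \<le> C1 * J x w * r powr (real DIM('a) + \<alpha>)" using J1 by (simp add: mult.assoc)
  have "\<Phi> (q r x) * r powr (-(real DIM('a) + \<alpha>)) \<le> Kq * \<Phi> k * r powr (-(real DIM('a) + \<alpha>))"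
    using \<Phi>q_le[OF assms] unfolding k_def by (intro mult_right_mono) auto
  also have "\<dots> \<le> Kq * (C1 * J x w * r powr (real DIM('a) + \<alpha>)) * r powr (-(real DIM('a) + \<alpha>))"
    using J2 Kq_ge1 by (intro mult_right_mono mult_left_mono) auto
  also have "\<dots> = C1 * Kq * J x w * (r powr (real DIM('a) + \<alpha>) * r powr (-(real DIM('a) + \<alpha>)))" by (simp only: ac_simps)
  also have "r powr (real DIM('a) + \<alpha>) * r powr (-(real DIM('a) + \<alpha>)) = 1" using r by (simp add: powr_add[symmetric])
  also have "C1 * Kq * J x w * 1 = C1 * Kq * J x w" by simp
  finally show ?thesis .
qed

lemma S_lower:
  assumes x: "x \<in> D" and r: "0 < r" "r \<le> R0"
  shows "ennreal (unit_ball_vol (real DIM('a)) * (\<kappa>*r/4) ^ DIM('a))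
          \<le> emeasure lborel {w\<in>D. dist x w < r/2 \<and> \<kappa>*r/4 \<le> \<delta> w}"
proof -
  have "x \<in> closure D" using x closure_subset by auto
  moreover have "0 < r/2" "r/2 < R0" using r R0 by auto
  ultimately obtain z where z: "z \<in> D" "ball z (\<kappa> * (r/2)) \<subseteq> D \<inter> ball x (r/2)" using fat by blast
  have sub: "ball z (\<kappa>*r/4) \<subseteq> {w\<in>D. dist x w < r/2 \<and> \<kappa>*r/4 \<le> \<delta> w}"
  proof
    fix w assume w: "w \<in> ball z (\<kappa>*r/4)"
    have "ball w (\<kappa>*r/4) \<subseteq> ball z (\<kappa> * (r/2))"
    proof
      fix v assume "v \<in> ball w (\<kappa>*r/4)"
      hence "dist z v < \<kappa>*r/4 + \<kappa>*r/4" using w dist_triangle[of z v w] by (simp add: dist_commute)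
      thus "v \<in> ball z (\<kappa> * (r/2))" by simp
    qed
    hence b: "ball w (\<kappa>*r/4) \<subseteq> D" using z by auto
    have "dist z w < \<kappa>*r/4" using w by simp
    moreover have "\<kappa>*r/4 \<le> \<kappa> * (r/2)" using \<kappa> r by simp
    ultimately have "w \<in> ball z (\<kappa> * (r/2))" by simp
    hence "w \<in> D \<and> dist x w < r/2" using z by auto
    thus "w \<in> {w\<in>D. dist x w < r/2 \<and> \<kappa>*r/4 \<le> \<delta> w}" using \<delta>_ball[OF b] by auto
  qed
  have Dm[measurable]: "D \<in> sets borel" using Do by (rule borel_open)
  have "emeasure lborel (ball z (\<kappa>*r/4)) \<le> emeasure lborel {w\<in>D. dist x w < r/2 \<and> \<kappa>*r/4 \<le> \<delta> w}"
    by (rule emeasure_mono[OF sub]) measurable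
  thus ?thesis using \<kappa> r by (simp add: emeasure_ball)
qed

lemma P6:
  assumes r: "0 < r"
  shows "(\<integral>\<^sup>+x. indicator (ball w r) x * ennreal (\<Phi> (q r x)) \<partial>lborel)
      \<le> ennreal (C\<beta> * \<Phi> 1 * (unit_ball_vol (real DIM('a)) + KA) * r powr (real DIM('a)))"
proof -
  let ?d = "real DIM('a)"
  let ?w = "unit_ball_vol ?d"
  define C where "C = C\<beta> * \<Phi> 1"
  have "1*1 \<le> C\<beta> * \<Phi> 1" using C\<beta>_ge1 \<Phi>_ge1[of 1] by (intro mult_mono) auto
  hence C1': "1 \<le> C" unfolding C_def by simp
  have pw0: "\<Phi> (q r x) \<le> C * (1 + r powr \<beta> * \<delta> x powr (-\<beta>))" for x
  proof (cases "\<delta> x = 0")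
    case True
    hence "q r x = 0" unfolding q_def using m_0 by simp
    hence "\<Phi> (q r x) \<le> \<Phi> 1" using \<Phi>_mono[of 0 1] by simp
    also have "\<dots> \<le> C" unfolding C_def using C\<beta>_ge1 \<Phi>_ge1[of 1] by simp
    also have "\<dots> \<le> C * (1 + r powr \<beta> * \<delta> x powr (-\<beta>))" using C1' by simp
    finally show ?thesis .
  next
    case False
    hence dp: "0 < \<delta> x" using \<delta>_nonneg[of x] by simp
    define M where "M = max 1 (r / \<delta> x)"
    have "q r x \<le> M" unfolding q_def M_def using m_ratio[OF dp, of r] r by simp
    hence "\<Phi> (q r x) \<le> \<Phi> (M * 1)" using q_nonneg[of r x] r by (intro \<Phi>_mono) auto
    also have "\<dots> \<le> C\<beta> * M powr \<beta> * \<Phi> 1" by (rule \<Phi>_scale) (auto simp: M_def)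
    also have "M powr \<beta> \<le> 1 + (r / \<delta> x) powr \<beta>" unfolding M_def by (simp add: max_def)
    also have "(r / \<delta> x) powr \<beta> = r powr \<beta> * \<delta> x powr (-\<beta>)" unfolding powr_divide powr_minus by (simp add: divide_inverse)
    finally show ?thesis unfolding C_def using C\<beta>_ge1 \<Phi>_ge1[of 1] by (simp add: mult_left_mono mult_right_mono algebra_simps)
  qed
  have pw: "indicator (ball w r) x * ennreal (\<Phi> (q r x))
      \<le> ennreal C * (indicator (ball w r) x * 1 + ennreal (r powr \<beta>) * (indicator (ball w r) x * ennreal (\<delta> x powr (-\<beta>))))" for x
  proof (cases "x \<in> ball w r")
    case True
    have "ennreal (\<Phi> (q r x)) \<le> ennreal (C * (1 + r powr \<beta> * \<delta> x powr (-\<beta>)))" using pw0 by (rule ennreal_leI)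
    also have "\<dots> = ennreal C * (1 + ennreal (r powr \<beta>) * ennreal (\<delta> x powr (-\<beta>)))"
      using C1' by (simp add: ennreal_mult ennreal_plus)
    finally show ?thesis using True by simp
  qed simp
  have "(\<integral>\<^sup>+x. indicator (ball w r) x * ennreal (\<Phi> (q r x)) \<partial>lborel)
      \<le> (\<integral>\<^sup>+x. ennreal C * (indicator (ball w r) x * 1 + ennreal (r powr \<beta>) * (indicator (ball w r) x * ennreal (\<delta> x powr (-\<beta>)))) \<partial>lborel)"
    by (rule nn_integral_mono) (rule pw)
  also have "\<dots> = ennreal C * (\<integral>\<^sup>+x. indicator (ball w r) x * 1 + ennreal (r powr \<beta>) * (indicator (ball w r) x * ennreal (\<delta> x powr (-\<beta>))) \<partial>lborel)"
    by (rule nn_integral_cmult) measurable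
  also have "(\<integral>\<^sup>+x. indicator (ball w r) x * 1 + ennreal (r powr \<beta>) * (indicator (ball w r) x * ennreal (\<delta> x powr (-\<beta>))) \<partial>lborel)
      = (\<integral>\<^sup>+x. indicator (ball w r) x * 1 \<partial>lborel) + (\<integral>\<^sup>+x. ennreal (r powr \<beta>) * (indicator (ball w r) x * ennreal (\<delta> x powr (-\<beta>))) \<partial>lborel)"
    by (rule nn_integral_add) measurable
  also have "(\<integral>\<^sup>+x. ennreal (r powr \<beta>) * (indicator (ball w r) x * ennreal (\<delta> x powr (-\<beta>))) \<partial>lborel)
      = ennreal (r powr \<beta>) * (\<integral>\<^sup>+x. indicator (ball w r) x * ennreal (\<delta> x powr (-\<beta>)) \<partial>lborel)"
    by (rule nn_integral_cmult) measurable
  also have "ennreal C * ((\<integral>\<^sup>+x. indicator (ball w r) x * 1 \<partial>lborel) + ennreal (r powr \<beta>) * (\<integral>\<^sup>+x. indicator (ball w r) x * ennreal (\<delta> x powr (-\<beta>)) \<partial>lborel))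
      \<le> ennreal C * (ennreal (?w * r powr ?d) + ennreal (r powr \<beta>) * ennreal (KA * r powr (?d - \<beta>)))"
    using int_one[OF r, of w] int_delta[OF r, of w] by (intro mult_left_mono add_mono) auto
  also have "\<dots> = ennreal (C * (?w + KA) * r powr ?d)"
  proof -
    have e: "r powr \<beta> * (KA * r powr (?d - \<beta>)) = KA * r powr ?d" using r by (simp add: powr_add[symmetric])
    have "ennreal (?w * r powr ?d) + ennreal (r powr \<beta>) * ennreal (KA * r powr (?d - \<beta>))
        = ennreal (?w * r powr ?d + r powr \<beta> * (KA * r powr (?d - \<beta>)))"
      using KA_nonneg by (simp add: ennreal_mult ennreal_plus)
    also have "\<dots> = ennreal ((?w + KA) * r powr ?d)" unfolding e by (simp add: algebra_simps)
    finally show ?thesis using C1' KA_nonneg by (simp add: ennreal_mult[symmetric] mult.assoc)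
  qed
  finally show ?thesis unfolding C_def .
qed

end

context setting begin

definition sig where "sig = unit_ball_vol (real DIM('a)) * (\<kappa>/4) ^ DIM('a)"

lemma sig_pos: "0 < sig" unfolding sig_def using \<kappa> by simp

lemma J_pos:
  assumes x: "x \<in> D" and w: "w \<in> D" and xw: "x \<noteq> w"
  shows "0 < J x w"
proof -
  define k where "k = kernel_arg D A0 x w"
  have k0: "0 \<le> k" unfolding k_def using karg_nonneg x w .
  have \<Phi>k: "0 < \<Phi> k" using \<Phi>_ge1[OF k0] by simp
  have Lp: "0 < dist x w" using xw by simp
  have P: "0 < dist x w powr (real DIM('a) + \<alpha>)" using Lp by simp
  have "1 / C1 \<le> J x w * dist x w powr (real DIM('a) + \<alpha>) / \<Phi> k" using Jb x w xw unfolding k_def by blast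
  moreover have "0 < 1 / C1" using C1 by simp
  ultimately have "0 < J x w * dist x w powr (real DIM('a) + \<alpha>) / \<Phi> k" by linarith
  hence "0 < J x w * dist x w powr (real DIM('a) + \<alpha>)" using \<Phi>k by (simp add: zero_less_divide_iff)
  thus ?thesis using P by (simp add: zero_less_mult_iff)
qed

lemma pt_bound:
  assumes Jm: "(\<lambda>p. if p \<in> D \<times> D then J (fst p) (snd p) else 0) \<in> borel_measurable borel"
    and um[measurable]: "u \<in> borel_measurable borel" and x: "x \<in> D"
    and r: "0 < r" "r \<le> \<rho>" "r \<le> R0"
  shows "ennreal (2*(u x)\<^sup>2) * (\<integral>\<^sup>+y. indicator D y * indicator {y. \<rho> \<le> dist x y} y * ennreal (J x y) \<partial>lborel)
     \<le> ennreal (1/sig) * ((\<integral>\<^sup>+w. indicator D w * indicator {w. dist x w < \<rho>} w * ennreal (4*KW*C1*Kq * (u x - u w)\<^sup>2 * J x w) \<partial>lborel)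
        + (\<integral>\<^sup>+w. indicator D w * indicator {w. dist x w < r/2} w * ennreal (4*KW*r powr (-\<alpha> - real DIM('a)) * (u w)\<^sup>2 * \<Phi> (q r x)) \<partial>lborel))"
proof -
  let ?d = "real DIM('a)"
  define Jp where "Jp p = (if p \<in> D \<times> D then J (fst p) (snd p) else 0)" for p
  have Jpm[measurable]: "Jp \<in> borel_measurable (lborel \<Otimes>\<^sub>M lborel)" using Jm M2_meas unfolding Jp_def by blast
  have Dm[measurable]: "D \<in> sets borel" using Do by (rule borel_open)
  define S where "S = {w\<in>D. dist x w < r/2 \<and> \<kappa>*r/4 \<le> \<delta> w}"
  have Sm[measurable]: "S \<in> sets borel" unfolding S_def by measurable
  define X where "X = 2*(u x)\<^sup>2 * (KW * \<Phi> (q r x) * r powr (-\<alpha>))"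
  have \<Phi>1: "1 \<le> \<Phi> (q r x)" using \<Phi>_ge1 q_nonneg r by auto
  have X0: "0 \<le> X" unfolding X_def using KW_nonneg \<Phi>1 by simp
  define a where "a w = 4*KW*C1*Kq * (u x - u w)\<^sup>2 * J x w" for w
  define b where "b w = 4*KW*r powr (-\<alpha> - ?d) * (u w)\<^sup>2 * \<Phi> (q r x)" for w
  have b0: "0 \<le> b w" for w unfolding b_def using KW_nonneg \<Phi>1 by simp
  have a0: "0 \<le> a w" if "w \<in> D" for w
  proof (cases "w = x")
    case False
    have "0 \<le> J x w" using J_pos[OF x that] False by simp
    thus ?thesis unfolding a_def using KW_nonneg C1 Kq_ge1 by simp
  qed (simp add: a_def)
  have pw: "X \<le> r powr ?d * (a w + b w)" if w: "w \<in> S" for w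
  proof -
    have wD: "w \<in> D" and wd: "dist x w < r/2" and dw: "\<kappa>*r/4 \<le> \<delta> w" using w unfolding S_def by auto
    define K where "K = KW * \<Phi> (q r x) * r powr (-\<alpha>)"
    have K0: "0 \<le> K" unfolding K_def using KW_nonneg \<Phi>1 by simp
    have sq: "2*(u x)\<^sup>2 \<le> 4*(u x - u w)\<^sup>2 + 4*(u w)\<^sup>2"
    proof -
      have "(u x)\<^sup>2 = 2*(u x - u w)\<^sup>2 + 2*(u w)\<^sup>2 - (u x - 2 * u w)\<^sup>2" by (simp add: power2_eq_square algebra_simps)
      moreover have "0 \<le> (u x - 2 * u w)\<^sup>2" by simp
      ultimately show ?thesis by linarith
    qed
    have "X = 2*(u x)\<^sup>2 * K" unfolding X_def K_def ..
    also have "\<dots> \<le> (4*(u x - u w)\<^sup>2 + 4*(u w)\<^sup>2) * K" using sq K0 by (rule mult_right_mono)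
    also have "\<dots> = 4*((u x - u w)\<^sup>2 * K) + 4*((u w)\<^sup>2 * K)" by (simp add: algebra_simps)
    also have "(u x - u w)\<^sup>2 * K \<le> r powr ?d * (KW*C1*Kq * (u x - u w)\<^sup>2 * J x w)"
    proof (cases "w = x")
      case True thus ?thesis by simp
    next
      case False
      have JL: "\<Phi> (q r x) * r powr (-(?d + \<alpha>)) \<le> C1 * Kq * J x w" using J_lower[OF x wD] False r wd dw by auto
      have rr: "r powr (-\<alpha>) = r powr ?d * r powr (-(?d + \<alpha>))" using r by (simp add: powr_add[symmetric])
      have "(u x - u w)\<^sup>2 * K = (u x - u w)\<^sup>2 * KW * r powr ?d * (\<Phi> (q r x) * r powr (-(?d + \<alpha>)))"
        unfolding K_def rr by (simp add: ac_simps)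
      also have "\<dots> \<le> (u x - u w)\<^sup>2 * KW * r powr ?d * (C1 * Kq * J x w)"
        using JL KW_nonneg by (intro mult_left_mono) auto
      also have "\<dots> = r powr ?d * (KW*C1*Kq * (u x - u w)\<^sup>2 * J x w)" by (simp add: ac_simps)
      finally show ?thesis .
    qed
    also have "(u w)\<^sup>2 * K = r powr ?d * (KW*r powr (-\<alpha> - ?d) * (u w)\<^sup>2 * \<Phi> (q r x))"
    proof -
      have rr: "r powr (-\<alpha>) = r powr ?d * r powr (-\<alpha> - ?d)" using r by (simp add: powr_add[symmetric])
      show ?thesis unfolding K_def rr by (simp add: ac_simps)
    qed
    also have "4 * (r powr ?d * (KW*C1*Kq * (u x - u w)\<^sup>2 * J x w)) + 4 * (r powr ?d * (KW*r powr (-\<alpha> - ?d) * (u w)\<^sup>2 * \<Phi> (q r x)))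
        = r powr ?d * (a w + b w)" unfolding a_def b_def by (simp add: algebra_simps)
    finally show ?thesis by simp
  qed
  define g1 where "g1 w = indicator D w * indicator {w. dist x w < \<rho>} w * ennreal (4*KW*C1*Kq * (u x - u w)\<^sup>2 * Jp (x, w))" for w
  define g2 where "g2 w = indicator D w * indicator {w. dist x w < r/2} w * ennreal (b w)" for w
  have g1m[measurable]: "g1 \<in> borel_measurable lborel" unfolding g1_def by measurable
  have g2m[measurable]: "g2 \<in> borel_measurable lborel" unfolding g2_def b_def
    using \<Phi>q_meas[of r] r by measurable
  have "ennreal (sig * r ^ DIM('a)) = ennreal (unit_ball_vol (real DIM('a)) * (\<kappa>*r/4) ^ DIM('a))"
    unfolding sig_def by (simp add: power_mult_distrib power_divide mult.assoc)
  also have "\<dots> \<le> emeasure lborel S" unfolding S_def using S_lower[OF x r(1) r(3)] .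
  finally have mu: "ennreal (sig * r ^ DIM('a)) \<le> emeasure lborel S" .
  have "ennreal (sig * r ^ DIM('a)) * ennreal X \<le> emeasure lborel S * ennreal X"
    using mu by (rule mult_right_mono) simp
  also have "\<dots> = (\<integral>\<^sup>+w. ennreal X * indicator S w \<partial>lborel)"
    by (simp add: nn_integral_cmult_indicator mult.commute)
  also have "\<dots> \<le> (\<integral>\<^sup>+w. ennreal (r powr ?d) * (g1 w + g2 w) \<partial>lborel)"
  proof (rule nn_integral_mono)
    fix w
    show "ennreal X * indicator S w \<le> ennreal (r powr ?d) * (g1 w + g2 w)"
    proof (cases "w \<in> S")
      case True
      hence wD: "w \<in> D" and wd: "dist x w < r/2" unfolding S_def by auto
      have wr: "dist x w < \<rho>" using wd r by simp
      have "ennreal X \<le> ennreal (r powr ?d * (a w + b w))" using pw[OF True] by (rule ennreal_leI)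
      also have "\<dots> = ennreal (r powr ?d) * (ennreal (a w) + ennreal (b w))"
        using a0[OF wD] b0 by (simp add: ennreal_mult ennreal_plus)
      also have "ennreal (a w) = g1 w" unfolding g1_def a_def Jp_def using wD x wr by simp
      also have "ennreal (b w) = g2 w" unfolding g2_def using wD wd by simp
      finally show ?thesis using True by simp
    qed simp
  qed
  also have "\<dots> = ennreal (r powr ?d) * ((\<integral>\<^sup>+w. g1 w \<partial>lborel) + (\<integral>\<^sup>+w. g2 w \<partial>lborel))"
    by (simp add: nn_integral_cmult nn_integral_add)
  finally have main: "ennreal (sig * r ^ DIM('a)) * ennreal X
      \<le> ennreal (r powr ?d) * ((\<integral>\<^sup>+w. g1 w \<partial>lborel) + (\<integral>\<^sup>+w. g2 w \<partial>lborel))" .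
  have sr: "0 < sig * r ^ DIM('a)" using sig_pos r by simp
  have "ennreal X = ennreal (1 / (sig * r ^ DIM('a))) * (ennreal (sig * r ^ DIM('a)) * ennreal X)"
  proof -
    have "ennreal (1 / (sig * r ^ DIM('a))) * ennreal (sig * r ^ DIM('a)) = 1"
      using sr sig_pos r by (simp add: ennreal_mult[symmetric])
    thus ?thesis by (simp add: mult.assoc[symmetric])
  qed
  also have "\<dots> \<le> ennreal (1 / (sig * r ^ DIM('a))) * (ennreal (r powr ?d) * ((\<integral>\<^sup>+w. g1 w \<partial>lborel) + (\<integral>\<^sup>+w. g2 w \<partial>lborel)))"
    using main by (rule mult_left_mono) simp
  also have "\<dots> = ennreal (1/sig) * ((\<integral>\<^sup>+w. g1 w \<partial>lborel) + (\<integral>\<^sup>+w. g2 w \<partial>lborel))"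
  proof -
    have "ennreal (1 / (sig * r ^ DIM('a))) * ennreal (r powr ?d) = ennreal (1/sig)"
      using sr r sig_pos by (simp add: ennreal_mult[symmetric] powr_realpow)
    thus ?thesis by (simp add: mult.assoc[symmetric])
  qed
  finally have XX: "ennreal X \<le> ennreal (1/sig) * ((\<integral>\<^sup>+w. g1 w \<partial>lborel) + (\<integral>\<^sup>+w. g2 w \<partial>lborel))" .
  have "ennreal (2*(u x)\<^sup>2) * (\<integral>\<^sup>+y. indicator D y * indicator {y. \<rho> \<le> dist x y} y * ennreal (J x y) \<partial>lborel)
      \<le> ennreal (2*(u x)\<^sup>2) * ennreal (KW * \<Phi> (q r x) * r powr (-\<alpha>))"
    using W_bound[OF x r(1) r(2)] by (rule mult_left_mono) simp
  also have "\<dots> = ennreal X" unfolding X_def by (rule ennreal_mult'[symmetric]) simp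
  also note XX
  also have "(\<integral>\<^sup>+w. g1 w \<partial>lborel) = (\<integral>\<^sup>+w. indicator D w * indicator {w. dist x w < \<rho>} w * ennreal (4*KW*C1*Kq * (u x - u w)\<^sup>2 * J x w) \<partial>lborel)"
    unfolding g1_def Jp_def by (rule nn_integral_cong) (auto simp: x indicator_def)
  also have "(\<integral>\<^sup>+w. g2 w \<partial>lborel) = (\<integral>\<^sup>+w. indicator D w * indicator {w. dist x w < r/2} w * ennreal (4*KW*r powr (-\<alpha> - real DIM('a)) * (u w)\<^sup>2 * \<Phi> (q r x)) \<partial>lborel)"
    unfolding g2_def b_def ..
  finally show ?thesis .
qed

end

context setting begin

definition K6 where "K6 = C\<beta> * \<Phi> 1 * (unit_ball_vol (real DIM('a)) + KA)"
definition Cfin where "Cfin = 1 + 2 * (1/sig) * (4*KW*C1*Kq) + (1/sig) * (4*KW*K6)"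

lemma K6_nonneg: "0 \<le> K6" unfolding K6_def using C\<beta>_ge1 \<Phi>_ge1[of 1] KA_nonneg by simp

lemma Cfin_pos: "0 < Cfin"
  unfolding Cfin_def using sig_pos KW_nonneg C1 Kq_ge1 K6_nonneg
  by (intro add_pos_nonneg mult_nonneg_nonneg) auto

lemma main_bound:
  assumes Jm: "(\<lambda>p. if p \<in> D \<times> D then J (fst p) (snd p) else 0) \<in> borel_measurable borel"
    and Jsym: "\<forall>x\<in>D. \<forall>y\<in>D. J x y = J y x"
    and um[measurable]: "u \<in> borel_measurable borel" and \<rho>: "0 < \<rho>"
  shows "jump_energy J D u \<le> ennreal Cfin * (jump_energy (trunc_kernel \<rho> J) D u + ennreal ((min \<rho> R0) powr (-\<alpha>)) * l2sq D u)"
proof -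
  let ?d = "real DIM('a)"
  let ?M = "lborel \<Otimes>\<^sub>M lborel :: ('a \<times> 'a) measure"
  define r where "r = min \<rho> R0"
  have r: "0 < r" "r \<le> \<rho>" "r \<le> R0" unfolding r_def using \<rho> R0 by auto
  define Jp where "Jp p = (if p \<in> D \<times> D then J (fst p) (snd p) else 0)" for p
  have Jpm[measurable]: "Jp \<in> borel_measurable ?M" using Jm M2_meas unfolding Jp_def by blast
  have Dm[measurable]: "D \<in> sets borel" using Do by (rule borel_open)
  have \<Phi>qm[measurable]: "(\<lambda>x. \<Phi> (q r x)) \<in> borel_measurable borel" using \<Phi>q_meas r by simp
  define c1 where "c1 = 4*KW*C1*Kq"
  define c2 where "c2 = 4*KW*r powr (-\<alpha> - ?d)"
  have c1: "0 \<le> c1" unfolding c1_def using KW_nonneg C1 Kq_ge1 by simp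
  have c2: "0 \<le> c2" unfolding c2_def using KW_nonneg by simp
  define f1 where "f1 p = indicator (D\<times>D) p * indicator {p. dist (fst p) (snd p) < \<rho>} p * ennreal (c1 * (u (fst p) - u (snd p))\<^sup>2 * Jp p)" for p
  define f2 where "f2 p = indicator (D\<times>D) p * indicator {p. dist (fst p) (snd p) < r/2} p * ennreal (c2 * (u (snd p))\<^sup>2 * \<Phi> (q r (fst p)))" for p
  have f1m[measurable]: "f1 \<in> borel_measurable ?M" unfolding f1_def by measurable
  have f2m[measurable]: "f2 \<in> borel_measurable ?M" unfolding f2_def by measurable
  define Etr where "Etr = jump_energy (trunc_kernel \<rho> J) D u"
  define L2 where "L2 = l2sq D u"
  have Jpos: "\<And>x y. x \<in> D \<Longrightarrow> y \<in> D \<Longrightarrow> x \<noteq> y \<Longrightarrow> 0 \<le> J x y" using J_pos less_imp_le by blast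
  have ES: "jump_energy J D u \<le> Etr + (\<integral>\<^sup>+x. indicator D x * ennreal (2 * (u x)\<^sup>2) *
          (\<integral>\<^sup>+y. indicator D y * indicator {y. \<rho> \<le> dist x y} y * ennreal (J x y) \<partial>lborel) \<partial>lborel)"
    unfolding Etr_def by (rule energy_split[OF Do Jm Jsym Jpos um \<rho>])
  have step: "(\<integral>\<^sup>+x. indicator D x * ennreal (2 * (u x)\<^sup>2) *
          (\<integral>\<^sup>+y. indicator D y * indicator {y. \<rho> \<le> dist x y} y * ennreal (J x y) \<partial>lborel) \<partial>lborel)
      \<le> (\<integral>\<^sup>+x. ennreal (1/sig) * ((\<integral>\<^sup>+w. f1 (x, w) \<partial>lborel) + (\<integral>\<^sup>+w. f2 (x, w) \<partial>lborel)) \<partial>lborel)"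
  proof (rule nn_integral_mono)
    fix x
    show "indicator D x * ennreal (2 * (u x)\<^sup>2) *
          (\<integral>\<^sup>+y. indicator D y * indicator {y. \<rho> \<le> dist x y} y * ennreal (J x y) \<partial>lborel)
      \<le> ennreal (1/sig) * ((\<integral>\<^sup>+w. f1 (x, w) \<partial>lborel) + (\<integral>\<^sup>+w. f2 (x, w) \<partial>lborel))"
    proof (cases "x \<in> D")
      case x: True
      have e1: "(\<integral>\<^sup>+w. f1 (x, w) \<partial>lborel) = (\<integral>\<^sup>+w. indicator D w * indicator {w. dist x w < \<rho>} w * ennreal (4*KW*C1*Kq * (u x - u w)\<^sup>2 * J x w) \<partial>lborel)"
        unfolding f1_def c1_def Jp_def by (rule nn_integral_cong) (auto simp: x indicator_def)
      have e2: "(\<integral>\<^sup>+w. f2 (x, w) \<partial>lborel) = (\<integral>\<^sup>+w. indicator D w * indicator {w. dist x w < r/2} w * ennreal (4*KW*r powr (-\<alpha> - real DIM('a)) * (u w)\<^sup>2 * \<Phi> (q r x)) \<partial>lborel)"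
        unfolding f2_def c2_def by (rule nn_integral_cong) (auto simp: x indicator_def)
      show ?thesis unfolding e1 e2 using pt_bound[OF Jm um x r] x by simp
    qed simp
  qed
  also have "\<dots> = ennreal (1/sig) * ((\<integral>\<^sup>+x. \<integral>\<^sup>+w. f1 (x, w) \<partial>lborel \<partial>lborel) + (\<integral>\<^sup>+x. \<integral>\<^sup>+w. f2 (x, w) \<partial>lborel \<partial>lborel))"
  proof -
    have m1: "(\<lambda>x. \<integral>\<^sup>+w. f1 (x, w) \<partial>lborel) \<in> borel_measurable lborel"
      by (rule lborel.borel_measurable_nn_integral_fst) (rule f1m)
    have m2: "(\<lambda>x. \<integral>\<^sup>+w. f2 (x, w) \<partial>lborel) \<in> borel_measurable lborel"
      by (rule lborel.borel_measurable_nn_integral_fst) (rule f2m)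
    show ?thesis using m1 m2 by (simp add: nn_integral_cmult nn_integral_add)
  qed
  also have "(\<integral>\<^sup>+x. \<integral>\<^sup>+w. f1 (x, w) \<partial>lborel \<partial>lborel) = ennreal c1 * (2 * Etr)"
  proof -
    define g where "g p = indicator (D\<times>D) p * indicator {p. dist (fst p) (snd p) < \<rho>} p * ennreal ((u (fst p) - u (snd p))\<^sup>2 * Jp p)" for p
    have gm[measurable]: "g \<in> borel_measurable ?M" unfolding g_def by measurable
    have "(\<integral>\<^sup>+x. \<integral>\<^sup>+w. f1 (x, w) \<partial>lborel \<partial>lborel) = (\<integral>\<^sup>+p. f1 p \<partial>?M)"
      by (rule lborel.nn_integral_fst) (rule f1m)
    also have "\<dots> = (\<integral>\<^sup>+p. ennreal c1 * g p \<partial>?M)"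
    proof (rule nn_integral_cong)
      fix p :: "'a \<times> 'a"
      show "f1 p = ennreal c1 * g p"
        unfolding f1_def g_def using c1 by (simp add: ennreal_mult' mult.assoc mult.left_commute)
    qed
    also have "\<dots> = ennreal c1 * (\<integral>\<^sup>+p. g p \<partial>?M)" by (rule nn_integral_cmult) (rule gm)
    also have "(\<integral>\<^sup>+p. g p \<partial>?M) = 2 * Etr"
    proof -
      have "Etr = ennreal (1/2) * (\<integral>\<^sup>+p. g p \<partial>?M)"
        unfolding Etr_def jump_energy_def
      proof (intro arg_cong2[where f="(*)"] refl nn_integral_cong)
        fix p :: "'a \<times> 'a"
        show "indicator (D \<times> D) p * ennreal ((u (fst p) - u (snd p))\<^sup>2 * trunc_kernel \<rho> J (fst p) (snd p)) = g p"
          unfolding g_def Jp_def trunc_kernel_def by (cases "p \<in> D \<times> D") (auto simp: indicator_def)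
      qed
      moreover have "2 * ennreal (1/2) = 1" using ennreal_mult[of 2 "1/2"] by simp
      ultimately show ?thesis by (simp add: mult.assoc[symmetric])
    qed
    finally show ?thesis .
  qed
  also have "(\<integral>\<^sup>+x. \<integral>\<^sup>+w. f2 (x, w) \<partial>lborel \<partial>lborel) \<le> ennreal (4*KW*K6) * ennreal (r powr (-\<alpha>)) * L2"
  proof -
    have "(\<integral>\<^sup>+x. \<integral>\<^sup>+w. f2 (x, w) \<partial>lborel \<partial>lborel) = (\<integral>\<^sup>+w. \<integral>\<^sup>+x. f2 (x, w) \<partial>lborel \<partial>lborel)"
      by (rule lborel_pair.Fubini[symmetric]) (rule f2m)
    also have "\<dots> \<le> (\<integral>\<^sup>+w. indicator D w * ennreal (c2 * (u w)\<^sup>2) * ennreal (K6 * r powr ?d) \<partial>lborel)"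
    proof (rule nn_integral_mono)
      fix w
      have "(\<integral>\<^sup>+x. f2 (x, w) \<partial>lborel) \<le> (\<integral>\<^sup>+x. (indicator D w * ennreal (c2 * (u w)\<^sup>2)) * (indicator (ball w r) x * ennreal (\<Phi> (q r x))) \<partial>lborel)"
      proof (rule nn_integral_mono)
        fix x
        show "f2 (x, w) \<le> (indicator D w * ennreal (c2 * (u w)\<^sup>2)) * (indicator (ball w r) x * ennreal (\<Phi> (q r x)))"
        proof (cases "x \<in> D \<and> w \<in> D \<and> dist x w < r/2")
          case True
          hence "x \<in> ball w r" using r by (simp add: dist_commute)
          thus ?thesis using True c2 unfolding f2_def by (simp add: ennreal_mult')
        qed (auto simp: f2_def)
      qed
      also have "\<dots> = (indicator D w * ennreal (c2 * (u w)\<^sup>2)) * (\<integral>\<^sup>+x. indicator (ball w r) x * ennreal (\<Phi> (q r x)) \<partial>lborel)"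
        by (rule nn_integral_cmult) measurable
      also have "\<dots> \<le> (indicator D w * ennreal (c2 * (u w)\<^sup>2)) * ennreal (K6 * r powr ?d)"
        using P6[OF r(1), of w] unfolding K6_def by (rule mult_left_mono) simp
      finally show "(\<integral>\<^sup>+x. f2 (x, w) \<partial>lborel) \<le> indicator D w * ennreal (c2 * (u w)\<^sup>2) * ennreal (K6 * r powr ?d)" .
    qed
    also have "\<dots> = (\<integral>\<^sup>+w. ennreal (4*KW*K6) * ennreal (r powr (-\<alpha>)) * (indicator D w * ennreal ((u w)\<^sup>2)) \<partial>lborel)"
    proof (rule nn_integral_cong)
      fix w
      have "c2 * (u w)\<^sup>2 * (K6 * r powr ?d) = (4*KW*K6) * r powr (-\<alpha>) * (u w)\<^sup>2"
      proof -
        have "r powr (-\<alpha> - ?d) * r powr ?d = r powr (-\<alpha>)" using r by (simp add: powr_add[symmetric])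
        thus ?thesis unfolding c2_def by (simp add: ac_simps)
      qed
      hence "ennreal (c2 * (u w)\<^sup>2) * ennreal (K6 * r powr ?d) = ennreal (4*KW*K6) * ennreal (r powr (-\<alpha>)) * ennreal ((u w)\<^sup>2)"
        using c2 K6_nonneg KW_nonneg by (simp add: ennreal_mult'[symmetric] mult.assoc)
      thus "indicator D w * ennreal (c2 * (u w)\<^sup>2) * ennreal (K6 * r powr ?d) = ennreal (4*KW*K6) * ennreal (r powr (-\<alpha>)) * (indicator D w * ennreal ((u w)\<^sup>2))"
        by (simp add: ac_simps)
    qed
    also have "\<dots> = ennreal (4*KW*K6) * ennreal (r powr (-\<alpha>)) * L2"
      unfolding L2_def l2sq_def by (rule nn_integral_cmult) measurable
    finally show ?thesis .
  qed
  finally have L: "(\<integral>\<^sup>+x. indicator D x * ennreal (2 * (u x)\<^sup>2) *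
          (\<integral>\<^sup>+y. indicator D y * indicator {y. \<rho> \<le> dist x y} y * ennreal (J x y) \<partial>lborel) \<partial>lborel)
     \<le> ennreal (1/sig) * (ennreal c1 * (2 * Etr) + ennreal (4*KW*K6) * ennreal (r powr (-\<alpha>)) * L2)"
    by (simp add: mult_left_mono add_left_mono)
  define A where "A = ennreal (1/sig)"
  define B where "B = ennreal c1"
  define C where "C = ennreal (4*KW*K6)"
  define R where "R = ennreal (r powr (-\<alpha>))"
  have Cf: "ennreal Cfin = 1 + 2*A*B + A*C"
  proof -
    have s0: "0 \<le> 1/sig" using sig_pos by simp
    have k0: "0 \<le> 4*KW*K6" using KW_nonneg K6_nonneg by simp
    have eq: "Cfin = (1 + (2*(1/sig))*c1) + (1/sig)*(4*KW*K6)" unfolding Cfin_def c1_def by simp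
    have "ennreal Cfin = ennreal (1 + (2*(1/sig))*c1) + ennreal ((1/sig)*(4*KW*K6))"
      unfolding eq by (rule ennreal_plus) (use s0 c1 k0 in auto)
    also have "ennreal (1 + (2*(1/sig))*c1) = ennreal 1 + ennreal ((2*(1/sig))*c1)"
      by (rule ennreal_plus) (use s0 c1 in auto)
    also have "ennreal ((2*(1/sig))*c1) = ennreal (2*(1/sig)) * ennreal c1" by (rule ennreal_mult''[OF c1])
    also have "ennreal (2*(1/sig)) = ennreal 2 * ennreal (1/sig)" by (rule ennreal_mult''[OF s0])
    also have "ennreal ((1/sig)*(4*KW*K6)) = ennreal (1/sig) * ennreal (4*KW*K6)" by (rule ennreal_mult''[OF k0])
    finally show ?thesis unfolding A_def B_def C_def by simp
  qed
  have "jump_energy J D u \<le> Etr + A * (B * (2 * Etr) + C * R * L2)"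
    using ES L unfolding A_def B_def C_def R_def by (meson add_left_mono order_trans)
  also have "\<dots> = (1 + 2*A*B) * Etr + (A*C) * (R * L2)" by (simp add: algebra_simps)
  also have "\<dots> \<le> (1 + 2*A*B + A*C) * Etr + (1 + 2*A*B + A*C) * (R * L2)"
  proof -
    have i1: "1 + 2*A*B \<le> 1 + 2*A*B + A*C" by (rule add_increasing2) simp_all
    have i2: "A*C \<le> 1 + 2*A*B + A*C" by (rule add_increasing) simp_all
    show ?thesis by (intro add_mono mult_right_mono i1 i2) simp_all
  qed
  also have "\<dots> = ennreal Cfin * (Etr + R * L2)" unfolding Cf by (simp add: algebra_simps)
  finally show ?thesis unfolding Etr_def R_def L2_def r_def .
qed

end

lemma karg_empty:
  assumes Fe: "frontier D = {}" and A0: "0 < A0"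
  shows "0 \<le> kernel_arg D A0 x y \<and> kernel_arg D A0 x y \<le> 1"
proof -
  have de: "delta_e D z = \<infinity>" for z using Fe by (simp add: delta_e_def)
  show ?thesis
  proof (cases A0)
    case (real a)
    hence a: "0 < a" using A0 by simp
    have "kernel_arg D A0 x y = (min (dist x y) a)\<^sup>2 / (a * a)"
      unfolding kernel_arg_def de using real a by (simp add: min_def power2_eq_square)
    moreover have "(min (dist x y) a)\<^sup>2 \<le> a * a"
      using a by (simp add: power2_eq_square mult_mono min_def)
    ultimately show ?thesis using a by simp
  next
    case PInf
    thus ?thesis unfolding kernel_arg_def de by simp
  next
    case MInf
    thus ?thesis using A0 by simp
  qed
qed

lemma empty_case:
  fixes D :: "'a::euclidean_space set" and J :: "'a \<Rightarrow> 'a \<Rightarrow> real"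
  assumes Do: "open D" and Fe: "frontier D = {}" and \<alpha>: "0 < \<alpha>"
    and Jm: "(\<lambda>p. if p \<in> D \<times> D then J (fst p) (snd p) else 0) \<in> borel_measurable borel"
    and Jsym: "\<forall>x\<in>D. \<forall>y\<in>D. J x y = J y x"
    and \<Phi>mono: "mono_on {0..} \<Phi>" and \<Phi>ge: "\<forall>t\<ge>0. 1 \<le> \<Phi> t" and A0: "0 < A0" and C1: "1 < C1"
    and Jb: "\<forall>x\<in>D. \<forall>y\<in>D. x \<noteq> y \<longrightarrow> 1 / C1 \<le> J x y * dist x y powr (real DIM('a) + \<alpha>) / \<Phi> (kernel_arg D A0 x y) \<and>
               J x y * dist x y powr (real DIM('a) + \<alpha>) / \<Phi> (kernel_arg D A0 x y) \<le> C1"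
    and um[measurable]: "u \<in> borel_measurable borel" and \<rho>: "0 < \<rho>" and R0: "0 < R0"
  shows "jump_energy J D u \<le> ennreal (1 + 2 * (C1 * \<Phi> 1 * unit_ball_vol (real DIM('a)) * 2 powr real DIM('a) / (1 - 2 powr (-\<alpha>))))
            * (jump_energy (trunc_kernel \<rho> J) D u + ennreal ((min \<rho> R0) powr (-\<alpha>)) * l2sq D u)"
proof -
  let ?d = "real DIM('a)"
  let ?w = "unit_ball_vol ?d"
  define KE where "KE = C1 * \<Phi> 1 * ?w * 2 powr ?d / (1 - 2 powr (-\<alpha>))"
  have q1: "2 powr (-\<alpha>) < 1" using \<alpha> by (simp add: powr_less_one)
  have \<Phi>1: "1 \<le> \<Phi> 1" using \<Phi>ge by simp
  have KE0: "0 \<le> KE" unfolding KE_def using C1 \<Phi>1 q1 by (intro divide_nonneg_nonneg mult_nonneg_nonneg) auto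
  have Dm[measurable]: "D \<in> sets borel" using Do by (rule borel_open)
  have Jbd: "0 \<le> J x y \<and> J x y \<le> C1 * \<Phi> 1 * dist x y powr (-?d - \<alpha>)" if "x \<in> D" "y \<in> D" "x \<noteq> y" for x y
  proof -
    define k where "k = kernel_arg D A0 x y"
    have k: "0 \<le> k" "k \<le> 1" using karg_empty[OF Fe A0] unfolding k_def by auto
    have \<Phi>k: "1 \<le> \<Phi> k" using \<Phi>ge k by auto
    have \<Phi>k1: "\<Phi> k \<le> \<Phi> 1" using \<Phi>mono k by (auto simp: mono_on_def)
    have Lp: "0 < dist x y" using that by simp
    have P: "0 < dist x y powr (?d + \<alpha>)" using Lp by simp
    have b: "1 / C1 \<le> J x y * dist x y powr (?d + \<alpha>) / \<Phi> k" "J x y * dist x y powr (?d + \<alpha>) / \<Phi> k \<le> C1"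
      using Jb that unfolding k_def by auto
    have "0 < 1/C1" using C1 by simp
    hence "0 < J x y * dist x y powr (?d + \<alpha>) / \<Phi> k" using b by linarith
    hence "0 < J x y * dist x y powr (?d + \<alpha>)" using \<Phi>k by (simp add: zero_less_divide_iff)
    hence J0: "0 \<le> J x y" using P by (simp add: zero_less_mult_iff)
    have "J x y * dist x y powr (?d + \<alpha>) \<le> C1 * \<Phi> k" using b \<Phi>k by (simp add: divide_le_eq)
    also have "\<dots> \<le> C1 * \<Phi> 1" using \<Phi>k1 C1 by simp
    finally have "J x y \<le> C1 * \<Phi> 1 / dist x y powr (?d + \<alpha>)" using P by (simp add: pos_le_divide_eq)
    also have "\<dots> = C1 * \<Phi> 1 * dist x y powr (-(?d + \<alpha>))" by (simp only: powr_minus divide_inverse)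
    also have "-(?d + \<alpha>) = -?d - \<alpha>" by simp
    finally show ?thesis using J0 by simp
  qed
  have Jpos: "\<And>x y. x \<in> D \<Longrightarrow> y \<in> D \<Longrightarrow> x \<noteq> y \<Longrightarrow> 0 \<le> J x y" using Jbd by blast
  have W: "(\<integral>\<^sup>+y. indicator D y * indicator {y. \<rho> \<le> dist x y} y * ennreal (J x y) \<partial>lborel) \<le> ennreal (KE * \<rho> powr (-\<alpha>))"
    if x: "x \<in> D" for x
  proof -
    have "(\<integral>\<^sup>+y. indicator D y * indicator {y. \<rho> \<le> dist x y} y * ennreal (J x y) \<partial>lborel)
        \<le> (\<integral>\<^sup>+y. ennreal (C1 * \<Phi> 1) * (indicator {y. \<rho> \<le> dist x y} y * ennreal (dist x y powr (-?d - \<alpha>)) * 1) \<partial>lborel)"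
    proof (rule nn_integral_mono)
      fix y
      show "indicator D y * indicator {y. \<rho> \<le> dist x y} y * ennreal (J x y)
          \<le> ennreal (C1 * \<Phi> 1) * (indicator {y. \<rho> \<le> dist x y} y * ennreal (dist x y powr (-?d - \<alpha>)) * 1)"
      proof (cases "y \<in> D \<and> \<rho> \<le> dist x y")
        case True
        hence "x \<noteq> y" using \<rho> by auto
        hence "J x y \<le> C1 * \<Phi> 1 * dist x y powr (-?d - \<alpha>)" using Jbd x True by blast
        hence "ennreal (J x y) \<le> ennreal (C1 * \<Phi> 1) * ennreal (dist x y powr (-?d - \<alpha>))"
          using C1 \<Phi>1 by (simp add: ennreal_mult'[symmetric] ennreal_leI)
        thus ?thesis using True by simp
      qed auto
    qed
    also have "\<dots> = ennreal (C1 * \<Phi> 1) * (\<integral>\<^sup>+y. indicator {y. \<rho> \<le> dist x y} y * ennreal (dist x y powr (-?d - \<alpha>)) * 1 \<partial>lborel)"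
      by (rule nn_integral_cmult) measurable
    also have "(\<integral>\<^sup>+y. indicator {y. \<rho> \<le> dist x y} y * ennreal (dist x y powr (-?d - \<alpha>)) * 1 \<partial>lborel)
        \<le> ennreal (?w * 2 powr ?d * \<rho> powr ((-?d - \<alpha>) + ?d) / (1 - 2 powr ((-?d - \<alpha>) + ?d)))"
    proof (rule dyadic_tail)
      show "(\<lambda>y. 1::ennreal) \<in> borel_measurable borel" by simp
      show "\<And>R. 0 < R \<Longrightarrow> (\<integral>\<^sup>+y. indicator (ball x R) y * 1 \<partial>lborel) \<le> ennreal (?w * R powr ?d)"
        by (simp add: emeasure_ball powr_realpow)
      show "(-?d - \<alpha>) + ?d < 0" using \<alpha> by simp
      show "-?d - \<alpha> \<le> 0" using \<alpha> by simp
      show "0 < \<rho>" by (rule \<rho>)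
      show "0 \<le> ?w" by simp
    qed
    also have "(-?d - \<alpha>) + ?d = -\<alpha>" by simp
    finally have "(\<integral>\<^sup>+y. indicator D y * indicator {y. \<rho> \<le> dist x y} y * ennreal (J x y) \<partial>lborel)
        \<le> ennreal (C1 * \<Phi> 1) * ennreal (?w * 2 powr ?d * \<rho> powr (-\<alpha>) / (1 - 2 powr (-\<alpha>)))"
      by (simp add: mult_left_mono)
    also have "\<dots> = ennreal (KE * \<rho> powr (-\<alpha>))"
      unfolding KE_def using C1 \<Phi>1 by (simp add: ennreal_mult'[symmetric] ac_simps)
    finally show ?thesis .
  qed
  define Etr where "Etr = jump_energy (trunc_kernel \<rho> J) D u"
  define L2 where "L2 = l2sq D u"
  define r where "r = min \<rho> R0"
  have r: "0 < r" "r \<le> \<rho>" unfolding r_def using \<rho> R0 by auto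
  have "jump_energy J D u \<le> Etr + (\<integral>\<^sup>+x. indicator D x * ennreal (2 * (u x)\<^sup>2) *
          (\<integral>\<^sup>+y. indicator D y * indicator {y. \<rho> \<le> dist x y} y * ennreal (J x y) \<partial>lborel) \<partial>lborel)"
    unfolding Etr_def by (rule energy_split[OF Do Jm Jsym Jpos um \<rho>])
  also have "(\<integral>\<^sup>+x. indicator D x * ennreal (2 * (u x)\<^sup>2) *
          (\<integral>\<^sup>+y. indicator D y * indicator {y. \<rho> \<le> dist x y} y * ennreal (J x y) \<partial>lborel) \<partial>lborel)
      \<le> (\<integral>\<^sup>+x. ennreal (2 * KE * \<rho> powr (-\<alpha>)) * (indicator D x * ennreal ((u x)\<^sup>2)) \<partial>lborel)"
  proof (rule nn_integral_mono)
    fix x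
    show "indicator D x * ennreal (2 * (u x)\<^sup>2) *
          (\<integral>\<^sup>+y. indicator D y * indicator {y. \<rho> \<le> dist x y} y * ennreal (J x y) \<partial>lborel)
      \<le> ennreal (2 * KE * \<rho> powr (-\<alpha>)) * (indicator D x * ennreal ((u x)\<^sup>2))"
    proof (cases "x \<in> D")
      case True
      have "ennreal (2 * (u x)\<^sup>2) * (\<integral>\<^sup>+y. indicator D y * indicator {y. \<rho> \<le> dist x y} y * ennreal (J x y) \<partial>lborel)
          \<le> ennreal (2 * (u x)\<^sup>2) * ennreal (KE * \<rho> powr (-\<alpha>))"
        using W[OF True] by (rule mult_left_mono) simp
      also have "\<dots> = ennreal (2 * KE * \<rho> powr (-\<alpha>)) * ennreal ((u x)\<^sup>2)"
        using KE0 by (simp add: ennreal_mult'[symmetric] ac_simps)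
      finally show ?thesis using True by simp
    qed simp
  qed
  also have "\<dots> = ennreal (2 * KE * \<rho> powr (-\<alpha>)) * L2"
    unfolding L2_def l2sq_def by (rule nn_integral_cmult) measurable
  also have "\<dots> \<le> ennreal (2 * KE) * ennreal (r powr (-\<alpha>)) * L2"
  proof (rule mult_right_mono)
    have "\<rho> powr (-\<alpha>) \<le> r powr (-\<alpha>)" using r \<alpha> by (intro powr_mono2') auto
    hence "2 * KE * \<rho> powr (-\<alpha>) \<le> 2 * KE * r powr (-\<alpha>)" using KE0 by (simp add: mult_left_mono)
    hence "ennreal (2 * KE * \<rho> powr (-\<alpha>)) \<le> ennreal (2 * KE * r powr (-\<alpha>))" by (rule ennreal_leI)
    also have "\<dots> = ennreal (2 * KE) * ennreal (r powr (-\<alpha>))" using KE0 by (simp add: ennreal_mult')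
    finally show "ennreal (2 * KE * \<rho> powr (-\<alpha>)) \<le> ennreal (2 * KE) * ennreal (r powr (-\<alpha>))" .
  qed simp
  finally have main: "jump_energy J D u \<le> Etr + ennreal (2 * KE) * ennreal (r powr (-\<alpha>)) * L2" by (simp add: add_left_mono)
  define B where "B = ennreal (2 * KE)"
  define R where "R = ennreal (r powr (-\<alpha>))"
  have Cf: "ennreal (1 + 2 * KE) = 1 + B" unfolding B_def using KE0 by (simp add: ennreal_plus)
  have "Etr + B * R * L2 \<le> (1 + B) * Etr + (1 + B) * (R * L2)"
  proof (intro add_mono)
    show "Etr \<le> (1 + B) * Etr" by (simp add: distrib_right add_increasing2)
    show "B * R * L2 \<le> (1 + B) * (R * L2)" by (simp add: distrib_right mult.assoc add_increasing)
  qed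
  also have "\<dots> = ennreal (1 + 2 * KE) * (Etr + R * L2)" unfolding Cf by (simp add: algebra_simps)
  finally show ?thesis using main unfolding Etr_def L2_def R_def r_def B_def KE_def
    by (meson order_trans)
qed

lemma energy_restrict:
  "jump_energy K D u = jump_energy K D (\<lambda>x. indicator D x * u x)"
proof -
  have "indicator (D\<times>D) p * ennreal ((u (fst p) - u (snd p))\<^sup>2 * K (fst p) (snd p))
      = indicator (D\<times>D) p * ennreal (((indicator D (fst p) * u (fst p)) - (indicator D (snd p) * u (snd p)))\<^sup>2 * K (fst p) (snd p))" for p
    by (cases "p \<in> D\<times>D") (auto simp: mem_Times_iff)
  thus ?thesis unfolding jump_energy_def by simp
qed

lemma l2sq_restrict:
  "l2sq D u = l2sq D (\<lambda>x. indicator D x * u x)"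
  unfolding l2sq_def by (intro nn_integral_cong) (auto simp: indicator_def)

theorem proposition3p4:
  fixes D :: "'a::euclidean_space set" and J :: "'a \<Rightarrow> 'a \<Rightarrow> real"
    and \<alpha> \<kappa> R0 :: real
  assumes "0 < \<alpha>" and "\<alpha> < 2"
    and "kappa_fat D \<kappa> R0"
    and "assouad_dim (frontier D) < ereal (real DIM('a))"
    and "assumption_A D \<alpha> J"
  shows "\<exists>C>0. \<forall>\<rho> u. 0 < \<rho> \<and> ereal \<rho> < diam_e D \<and> in_F J D u \<longrightarrow>
           jump_energy J D u \<le> ennreal C * (jump_energy (trunc_kernel \<rho> J) D u
              + ennreal ((min \<rho> R0) powr (-\<alpha>)) * l2sq D u)"
proof -
  let ?d = "real DIM('a)"
  from assms(3) have Do: "open D" and \<kappa>: "0 < \<kappa>" "\<kappa> < 1" and R0: "0 < R0"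
    and fat: "\<forall>x\<in>closure D. \<forall>r. 0 < r \<and> r < R0 \<longrightarrow> (\<exists>z\<in>D. ball z (\<kappa> * r) \<subseteq> D \<inter> ball x r)"
    unfolding kappa_fat_def by auto
  from assms(5) have Jsym: "\<forall>x\<in>D. \<forall>y\<in>D. J x y = J y x"
    and Jm: "(\<lambda>p. if p \<in> D \<times> D then J (fst p) (snd p) else 0) \<in> borel_measurable borel"
    and ex: "\<exists>\<Phi> A0 C1. continuous_on {0..} \<Phi> \<and> mono_on {0..} \<Phi> \<and> (\<forall>t\<ge>0. 1 \<le> \<Phi> t) \<and> \<Phi> 0 = 1 \<and>
        upper_matuszewska \<Phi> < min (ereal ?d - assouad_dim (frontier D)) (ereal \<alpha>) \<and>
        0 < A0 \<and> 1 < C1 \<and>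
        (\<forall>x\<in>D. \<forall>y\<in>D. x \<noteq> y \<longrightarrow>
           1 / C1 \<le> J x y * dist x y powr (?d + \<alpha>) / \<Phi> (kernel_arg D A0 x y) \<and>
           J x y * dist x y powr (?d + \<alpha>) / \<Phi> (kernel_arg D A0 x y) \<le> C1)"
    unfolding assumption_A_def by auto
  then obtain \<Phi> A0 C1 where \<Phi>cont: "continuous_on {0..} \<Phi>" and \<Phi>mono: "mono_on {0..} \<Phi>"
    and \<Phi>ge: "\<forall>t\<ge>0. 1 \<le> \<Phi> t" and idx: "upper_matuszewska \<Phi> < min (ereal ?d - assouad_dim (frontier D)) (ereal \<alpha>)"
    and A0: "0 < A0" and C1: "1 < C1"
    and Jb: "\<forall>x\<in>D. \<forall>y\<in>D. x \<noteq> y \<longrightarrow>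
           1 / C1 \<le> J x y * dist x y powr (?d + \<alpha>) / \<Phi> (kernel_arg D A0 x y) \<and>
           J x y * dist x y powr (?d + \<alpha>) / \<Phi> (kernel_arg D A0 x y) \<le> C1"
    by blast
  have vm: "(\<lambda>x. indicator D x * u x) \<in> borel_measurable borel" if "in_F J D u" for u
    using that unfolding in_F_def by simp
  show ?thesis
  proof (cases "frontier D = {}")
    case True
    define C where "C = 1 + 2 * (C1 * \<Phi> 1 * unit_ball_vol ?d * 2 powr ?d / (1 - 2 powr (-\<alpha>)))"
    have q1: "2 powr (-\<alpha>) < 1" using assms(1) by (simp add: powr_less_one)
    have "0 \<le> C1 * \<Phi> 1 * unit_ball_vol ?d * 2 powr ?d / (1 - 2 powr (-\<alpha>))"
      using C1 \<Phi>ge[rule_format, of 1] q1 by (intro divide_nonneg_nonneg mult_nonneg_nonneg) auto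
    hence C0: "0 < C" unfolding C_def by simp
    show ?thesis
    proof (intro exI[of _ C] conjI allI impI C0)
      fix \<rho> u assume h: "0 < \<rho> \<and> ereal \<rho> < diam_e D \<and> in_F J D u"
      show "jump_energy J D u \<le> ennreal C * (jump_energy (trunc_kernel \<rho> J) D u + ennreal ((min \<rho> R0) powr (-\<alpha>)) * l2sq D u)"
        unfolding C_def energy_restrict[of J D u] energy_restrict[of "trunc_kernel \<rho> J" D u] l2sq_restrict[of D u]
        by (rule empty_case[OF Do True assms(1) Jm Jsym \<Phi>mono \<Phi>ge A0 C1 Jb vm]) (use h R0 in auto)
    qed
  next
    case Fne: False
    from idx obtain b where b: "b \<in> {ereal \<beta> | \<beta>. \<beta> \<ge> 0 \<and> (\<exists>C. \<forall>s r. 0 < s \<and> s \<le> r \<longrightarrow>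
       \<Phi> r / \<Phi> s \<le> C * (r / s) powr \<beta>)}" and bl: "b < min (ereal ?d - assouad_dim (frontier D)) (ereal \<alpha>)"
      unfolding upper_matuszewska_def Inf_less_iff by blast
    then obtain \<beta> C\<beta> where \<beta>0: "0 \<le> \<beta>" and Cidx: "\<forall>s r. 0 < s \<and> s \<le> r \<longrightarrow> \<Phi> r / \<Phi> s \<le> C\<beta> * (r / s) powr \<beta>"
      and b\<beta>: "b = ereal \<beta>" by blast
    have \<beta>\<alpha>: "\<beta> < \<alpha>" using bl b\<beta> by simp
    have \<beta>d: "ereal \<beta> < ereal ?d - assouad_dim (frontier D)" using bl b\<beta> by simp
    have "assouad_dim (frontier D) < ereal (?d - \<beta>)"
    proof (cases "assouad_dim (frontier D)")
      case (real x) thus ?thesis using \<beta>d by simp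
    next
      case PInf thus ?thesis using \<beta>d by simp
    next
      case MInf thus ?thesis by simp
    qed
    then obtain c where c: "c \<in> {ereal s | s. s \<ge> 0 \<and> (\<exists>C>0. \<forall>x\<in>frontier D. \<forall>r R. 0 < r \<and> r < R \<longrightarrow>
       real (covering_number (frontier D \<inter> ball x R) r) \<le> C * (R / r) powr s)}" and cl: "c < ereal (?d - \<beta>)"
      unfolding assouad_dim_def Inf_less_iff by blast
    then obtain s Cs where s0: "0 \<le> s" and Cs: "0 < Cs"
      and cov: "\<forall>x\<in>frontier D. \<forall>r R. 0 < r \<and> r < R \<longrightarrow> real (covering_number (frontier D \<inter> ball x R) r) \<le> Cs * (R / r) powr s"
      and cs: "c = ereal s" by blast
    have s\<beta>: "\<beta> < ?d - s" using cl cs by simp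
    interpret setting D J \<alpha> \<kappa> R0 \<Phi> A0 C1 \<beta> C\<beta> s Cs
      using Do Fne assms(1) \<kappa> R0 fat \<Phi>mono \<Phi>ge \<Phi>cont \<beta>0 \<beta>\<alpha> Cidx s0 Cs s\<beta> cov A0 C1 Jb
      by unfold_locales auto
    show ?thesis
    proof (intro exI[of _ Cfin] conjI allI impI Cfin_pos)
      fix \<rho> u assume h: "0 < \<rho> \<and> ereal \<rho> < diam_e D \<and> in_F J D u"
      show "jump_energy J D u \<le> ennreal Cfin * (jump_energy (trunc_kernel \<rho> J) D u + ennreal ((min \<rho> R0) powr (-\<alpha>)) * l2sq D u)"
        unfolding energy_restrict[of J D u] energy_restrict[of "trunc_kernel \<rho> J" D u] l2sq_restrict[of D u]
        by (rule main_bound[OF Jm Jsym vm]) (use h in auto)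
    qed
  qed
qed

end
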